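(* Let $\alpha>1$, $0<\beta<\infty$, $u\in H(\mathbb{D})$ and $\varphi\in S(\mathbb{D})$. Then $uC_\varphi$ maps $\mathcal{B}^\alpha$ boundedly into $\mathcal{Z}_\beta$ if and only if the following three conditions hold: $$\sup_{z\in\mathbb{D}}\frac{(1-|z|^2)^\beta|2u'(z)\varphi'(z)+u(z)\varphi''(z)|}{(1-|\varphi(z)|^2)^\alpha}\asymp\sup_{n\ge0}(n+1)^\alpha\|(2u'\varphi'+u\varphi'')\varphi^n\|_{\nu_\beta}<\infty,$$ $$\sup_{z\in\mathbb{D}}\frac{(1-|z|^2)^\beta|u(z)\varphi'(z)^2|}{(1-|\varphi(z)|^2)^{\alpha+1}}\asymp\sup_{n\ge0}(n+1)^{\alpha+1}\|u(\varphi')^2\varphi^n\|_{\nu_\beta}<\infty,$$ $$\sup_{n\ge0}(n+1)^{\alpha-1}\|u''\varphi^n\|_{\nu_\beta}\asymp\sup_{z\in\mathbb{D}}\frac{(1-|z|^2)^\beta|u''(z)|}{(1-|\varphi(z)|^2)^{\alpha-1}}<\infty.$$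
   Context: $\mathbb{D}$ is the open unit disk in $\mathbb{C}$, $H(\mathbb{D})$ the space of holomorphic functions on $\mathbb{D}$, and $S(\mathbb{D})$ the set of holomorphic self-maps of $\mathbb{D}$. For $u\in H(\mathbb{D})$, $\varphi\in S(\mathbb{D})$, the weighted composition operator is $uC_\varphi f(z)=u(z)f(\varphi(z))$. For $\alpha>0$, the Bloch type space $\mathcal{B}^\alpha$ consists of $f\in H(\mathbb{D})$ with $\sup_{z}(1-|z|^2)^\alpha|f'(z)|<\infty$, normed by $|f(0)|+\sup_{z}(1-|z|^2)^\alpha|f'(z)|$. For $\beta>0$, the Zygmund type space $\mathcal{Z}_\beta$ consists of $f\in H(\mathbb{D})$ with $\sup_z(1-|z|^2)^\beta|f''(z)|<\infty$, normed by $\|f\|_{\mathcal{Z}_\beta}=|f(0)|+|f'(0)|+\sup_z(1-|z|^2)^\beta|f''(z)|$. For a holomorphic $g$ on $\mathbb{D}$, $\|g\|_{\nu_\beta}=\sup_{z\in\mathbb{D}}(1-|z|^2)^\beta|g(z)|$; $\varphi^n$ is the $n$-th power of $\varphi$. $A\asymp B$ means $B/C\le A\le CB$ for a positive constant $C$ (independent of $u,\varphi$). *)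

theory Defs
  imports "HOL-Analysis.Analysis"
begin

definition disc :: "complex set" where "disc = ball 0 1"

definition self_map :: "(complex \<Rightarrow> complex) \<Rightarrow> bool" where
  "self_map \<phi> \<longleftrightarrow> \<phi> holomorphic_on disc \<and> \<phi> ` disc \<subseteq> disc"

definition bloch_seminorm :: "real \<Rightarrow> (complex \<Rightarrow> complex) \<Rightarrow> ereal" where
  "bloch_seminorm \<alpha> f = (SUP z\<in>disc. ereal ((1 - (cmod z)^2) powr \<alpha> * cmod (deriv f z)))"

definition bloch_space :: "real \<Rightarrow> (complex \<Rightarrow> complex) set" where
  "bloch_space \<alpha> = {f. f holomorphic_on disc \<and> bloch_seminorm \<alpha> f < \<infinity>}"

definition bloch_norm :: "real \<Rightarrow> (complex \<Rightarrow> complex) \<Rightarrow> ereal" where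
  "bloch_norm \<alpha> f = ereal (cmod (f 0)) + bloch_seminorm \<alpha> f"

definition zyg_seminorm :: "real \<Rightarrow> (complex \<Rightarrow> complex) \<Rightarrow> ereal" where
  "zyg_seminorm \<beta> f = (SUP z\<in>disc. ereal ((1 - (cmod z)^2) powr \<beta> * cmod (deriv (deriv f) z)))"

definition zygmund_space :: "real \<Rightarrow> (complex \<Rightarrow> complex) set" where
  "zygmund_space \<beta> = {f. f holomorphic_on disc \<and> zyg_seminorm \<beta> f < \<infinity>}"

definition zyg_norm :: "real \<Rightarrow> (complex \<Rightarrow> complex) \<Rightarrow> ereal" where
  "zyg_norm \<beta> f = ereal (cmod (f 0)) + ereal (cmod (deriv f 0)) + zyg_seminorm \<beta> f"

definition nu_norm :: "real \<Rightarrow> (complex \<Rightarrow> complex) \<Rightarrow> ereal" where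
  "nu_norm \<beta> g = (SUP z\<in>disc. ereal ((1 - (cmod z)^2) powr \<beta> * cmod (g z)))"

definition wco :: "(complex \<Rightarrow> complex) \<Rightarrow> (complex \<Rightarrow> complex) \<Rightarrow> (complex \<Rightarrow> complex) \<Rightarrow> (complex \<Rightarrow> complex)" where
  "wco u \<phi> f = (\<lambda>z. u z * f (\<phi> z))"

definition bounded_wco_bloch_zyg :: "real \<Rightarrow> real \<Rightarrow> (complex \<Rightarrow> complex) \<Rightarrow> (complex \<Rightarrow> complex) \<Rightarrow> bool" where
  "bounded_wco_bloch_zyg \<alpha> \<beta> u \<phi> \<longleftrightarrow>
     (\<exists>C::real. \<forall>f\<in>bloch_space \<alpha>. wco u \<phi> f \<in> zygmund_space \<beta> \<and>
                 zyg_norm \<beta> (wco u \<phi> f) \<le> ereal C * bloch_norm \<alpha> f)"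

definition W1 :: "(complex \<Rightarrow> complex) \<Rightarrow> (complex \<Rightarrow> complex) \<Rightarrow> complex \<Rightarrow> complex" where
  "W1 u \<phi> z = 2 * deriv u z * deriv \<phi> z + u z * deriv (deriv \<phi>) z"

definition W2 :: "(complex \<Rightarrow> complex) \<Rightarrow> (complex \<Rightarrow> complex) \<Rightarrow> complex \<Rightarrow> complex" where
  "W2 u \<phi> z = u z * (deriv \<phi> z)^2"

definition W3 :: "(complex \<Rightarrow> complex) \<Rightarrow> complex \<Rightarrow> complex" where
  "W3 u z = deriv (deriv u) z"

definition sup_ratio :: "real \<Rightarrow> real \<Rightarrow> (complex \<Rightarrow> complex) \<Rightarrow> (complex \<Rightarrow> complex) \<Rightarrow> ereal" where
  "sup_ratio \<beta> \<gamma> \<phi> w = (SUP z\<in>disc. ereal ((1 - (cmod z)^2) powr \<beta> * cmod (w z) / (1 - (cmod (\<phi> z))^2) powr \<gamma>))"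

definition sup_power :: "real \<Rightarrow> real \<Rightarrow> (complex \<Rightarrow> complex) \<Rightarrow> (complex \<Rightarrow> complex) \<Rightarrow> ereal" where
  "sup_power \<beta> \<gamma> \<phi> w = (SUP n::nat. ereal ((real n + 1) powr \<gamma>) * nu_norm \<beta> (\<lambda>z. w z * (\<phi> z)^n))"

end

theory Submission
  imports Defs "HOL-Complex_Analysis.Cauchy_Integral_Formula"
begin


lemma powlemA_upper:
  fixes x \<gamma> :: real and n :: nat
  assumes g: "\<gamma> > 0" and x0: "0 \<le> x" and x1: "x < 1"
  shows "(real n + 1) powr \<gamma> * x^n \<le> (2 * max \<gamma> 1) powr \<gamma> * (1 - x^2) powr (-\<gamma>)"
proof -
  define q where "q = max \<gamma> 1"
  define t where "t = 1 - x"
  have q1: "q \<ge> 1" and qg: "\<gamma> \<le> q" unfolding q_def by auto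
  have t0: "t > 0" and t1: "t \<le> 1" using x0 x1 unfolding t_def by auto
  have e1: "1 + n * t / q \<le> exp (n * t / q)" by (rule exp_ge_add_one_self)
  have "1 + n*t \<le> q * (1 + n*t/q)" using q1 t0 by (simp add: algebra_simps)
  also have "\<dots> \<le> q * exp (n*t/q)" using e1 q1 by simp
  finally have a1: "1 + n*t \<le> q * exp (n*t/q)" .
  have a2: "(real n + 1) * t \<le> 1 + n*t" using t1 by (simp add: algebra_simps)
  have "((real n + 1) * t) powr \<gamma> \<le> (q * exp (n*t/q)) powr \<gamma>"
    using a1 a2 t0 g by (intro powr_mono2) auto
  also have "\<dots> = q powr \<gamma> * exp (\<gamma> * (n*t/q))"
    using q1 by (simp add: powr_def ln_mult exp_add algebra_simps)
  also have "\<dots> \<le> q powr \<gamma> * exp (n*t)"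
  proof -
    have "\<gamma> * (n*t/q) \<le> n*t" using qg q1 t0 g
    proof -
      have "\<gamma> / q \<le> 1" using qg q1 by simp
      then have "(\<gamma> / q) * (n*t) \<le> 1 * (n*t)" using t0 by (intro mult_right_mono) auto
      then show ?thesis by simp
    qed
    then show ?thesis by (intro mult_left_mono) auto
  qed
  finally have b1: "((real n + 1) * t) powr \<gamma> \<le> q powr \<gamma> * exp (n*t)" .
  have "x \<le> exp (x - 1)" using exp_ge_add_one_self[of "x-1"] by simp
  then have "x^n \<le> exp (x-1) ^ n" using x0 by (intro power_mono) auto
  also have "\<dots> = exp (- (n*t))" unfolding t_def by (simp add: exp_of_nat_mult[symmetric] algebra_simps)
  finally have b2: "x^n \<le> exp (-(n*t))" .
  have b1': "(real n + 1) powr \<gamma> * t powr \<gamma> \<le> q powr \<gamma> * exp (n*t)"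
    using b1 t0 by (simp add: powr_mult)
  have "(real n + 1) powr \<gamma> * t powr \<gamma> * x^n \<le> q powr \<gamma> * exp (n*t) * exp (-(n*t))"
    by (rule mult_mono[OF b1' b2]) (use x0 in auto)
  also have "\<dots> = q powr \<gamma>" by (simp add: exp_minus)
  finally have b3: "(real n + 1) powr \<gamma> * t powr \<gamma> * x^n \<le> q powr \<gamma>" .
  have tp: "t powr \<gamma> > 0" using t0 by simp
  have b4: "(real n + 1) powr \<gamma> * x^n \<le> q powr \<gamma> * t powr (-\<gamma>)"
    using b3 tp by (simp add: powr_minus field_simps)
  have "1 - x^2 = (1-x)*(1+x)" by (simp add: power2_eq_square algebra_simps)
  also have "\<dots> \<le> (1-x)*2" using x0 x1 by (intro mult_left_mono) auto
  finally have "1 - x^2 \<le> 2 * t" unfolding t_def by simp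
  moreover have "1 - x^2 > 0" using x0 x1 by (simp add: power_less_one_iff abs_square_less_1)
  ultimately have "(2*t) powr (-\<gamma>) \<le> (1 - x^2) powr (-\<gamma>)" using g
    by (intro powr_mono2') auto
  moreover have "q powr \<gamma> * t powr (-\<gamma>) = (2*q) powr \<gamma> * (2*t) powr (-\<gamma>)"
    using t0 q1 by (simp add: powr_mult powr_minus field_simps)
  ultimately have "q powr \<gamma> * t powr (-\<gamma>) \<le> (2*q) powr \<gamma> * (1 - x^2) powr (-\<gamma>)"
    by (metis mult_left_mono powr_ge_zero)
  with b4 show ?thesis unfolding q_def by simp
qed

lemma powlemA_lower:
  fixes x \<gamma> :: real
  assumes g: "\<gamma> > 0" and x0: "0 \<le> x" and x1: "x < 1"
  shows "\<exists>n::nat. (1 - x^2) powr (-\<gamma>) \<le> 2 powr (\<gamma>+1) * ((real n + 1) powr \<gamma> * x^n)"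
proof -
  define t where "t = 1 - x"
  have t0: "t > 0" and t1: "t \<le> 1" using x0 x1 unfolding t_def by auto
  define n where "n = nat \<lfloor>1/(2*t)\<rfloor>"
  have y0: "0 \<le> 1/(2*t)" using t0 by simp
  have fl: "real n = of_int \<lfloor>1/(2*t)\<rfloor>" unfolding n_def using y0 by simp
  have n1: "real n \<le> 1/(2*t)" using floor_correct[of "1/(2*t)"] fl by linarith
  have n2: "1/(2*t) < real n + 1" using floor_correct[of "1/(2*t)"] fl by linarith
  have "1 + real n * (-t) \<le> (1 + (-t))^n" using t1 by (intro Bernoulli_inequality) auto
  moreover have "real n * t \<le> 1/2" using n1 t0 by (simp add: field_simps)
  ultimately have xn: "x^n \<ge> 1/2" unfolding t_def
    by (simp add: algebra_simps)
  have "(1 - x^2) powr (-\<gamma>) \<le> t powr (-\<gamma>)"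
  proof -
    have "x * x \<le> x" using x0 x1 mult_left_le_one_le[of x x] by simp
    then have "t \<le> 1 - x^2" unfolding t_def by (simp add: power2_eq_square)
    then show ?thesis using t0 g by (intro powr_mono2') auto
  qed
  also have "t powr (-\<gamma>) = 2 powr \<gamma> * (1/(2*t)) powr \<gamma>"
    using t0 by (simp add: powr_minus powr_mult powr_divide field_simps)
  also have "\<dots> \<le> 2 powr \<gamma> * (real n + 1) powr \<gamma>"
    using n2 t0 g by (intro mult_left_mono powr_mono2) auto
  also have "\<dots> \<le> 2 powr (\<gamma>+1) * ((real n + 1) powr \<gamma> * x^n)"
  proof -
    have "2 powr \<gamma> * (real n + 1) powr \<gamma> = 2 powr (\<gamma>+1) * ((real n + 1) powr \<gamma> * (1/2))"
      by (simp add: powr_add)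
    also have "\<dots> \<le> 2 powr (\<gamma>+1) * ((real n + 1) powr \<gamma> * x^n)"
      using xn by (intro mult_left_mono) auto
    finally show ?thesis .
  qed
  finally show ?thesis by blast
qed



lemma disc_iff: "z \<in> disc \<longleftrightarrow> cmod z < 1" by (simp add: disc_def)
lemma disc_ne: "disc \<noteq> {}" by (auto simp: disc_def intro: exI[of _ 0])

lemma ereal_mult_le_helper:
  fixes a b :: ereal
  assumes "a \<le> b" "c \<ge> 0" shows "ereal c * a \<le> ereal c * b"
  using assms by (simp add: ereal_mult_left_mono)

lemma sup_ratio_le_power:
  assumes g: "\<gamma> > 0" and phi: "\<forall>z\<in>disc. cmod (\<phi> z) < 1"
  shows "sup_ratio \<beta> \<gamma> \<phi> w \<le> ereal (2 powr (\<gamma>+1)) * sup_power \<beta> \<gamma> \<phi> w"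
  unfolding sup_ratio_def
proof (rule SUP_least)
  fix z assume z: "z \<in> disc"
  define x where "x = cmod (\<phi> z)"
  have x0: "0 \<le> x" "x < 1" using phi z by (auto simp: x_def)
  obtain n where n: "(1-x^2) powr (-\<gamma>) \<le> 2 powr (\<gamma>+1) * ((real n+1) powr \<gamma> * x^n)"
    using powlemA_lower[OF g x0] by blast
  define B where "B = (1 - (cmod z)^2) powr \<beta> * cmod (w z)"
  have B0: "B \<ge> 0" unfolding B_def by simp
  have "B / (1 - x^2) powr \<gamma> = B * (1-x^2) powr (-\<gamma>)" by (simp add: powr_minus divide_inverse)
  also have "\<dots> \<le> B * (2 powr (\<gamma>+1) * ((real n+1) powr \<gamma> * x^n))" using n B0 by (rule mult_left_mono)
  also have "\<dots> = 2 powr (\<gamma>+1) * ((real n+1) powr \<gamma> * ((1 - (cmod z)^2) powr \<beta> * cmod (w z * \<phi> z ^ n)))"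
    by (simp add: B_def x_def norm_mult norm_power)
  finally have r: "B / (1 - x^2) powr \<gamma> \<le> 2 powr (\<gamma>+1) * ((real n+1) powr \<gamma> * ((1 - (cmod z)^2) powr \<beta> * cmod (w z * \<phi> z ^ n)))" .
  have nu: "ereal ((1 - (cmod z)^2) powr \<beta> * cmod (w z * \<phi> z ^ n)) \<le> nu_norm \<beta> (\<lambda>z. w z * \<phi> z ^n)"
    unfolding nu_norm_def by (rule SUP_upper2[OF z]) simp
  have pw: "ereal ((real n+1) powr \<gamma>) * nu_norm \<beta> (\<lambda>z. w z * \<phi> z ^n) \<le> sup_power \<beta> \<gamma> \<phi> w"
    unfolding sup_power_def by (intro SUP_upper2[where i=n]) auto
  have "ereal (B / (1 - x^2) powr \<gamma>) \<le> ereal (2 powr (\<gamma>+1)) * (ereal ((real n+1) powr \<gamma>) * ereal ((1 - (cmod z)^2) powr \<beta> * cmod (w z * \<phi> z ^ n)))"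
    using r by simp
  also have "\<dots> \<le> ereal (2 powr (\<gamma>+1)) * (ereal ((real n+1) powr \<gamma>) * nu_norm \<beta> (\<lambda>z. w z * \<phi> z ^n))"
    by (intro ereal_mult_le_helper nu) auto
  also have "\<dots> \<le> ereal (2 powr (\<gamma>+1)) * sup_power \<beta> \<gamma> \<phi> w"
    by (intro ereal_mult_le_helper pw) auto
  finally show "ereal ((1 - (cmod z)\<^sup>2) powr \<beta> * cmod (w z) / (1 - (cmod (\<phi> z))\<^sup>2) powr \<gamma>) \<le> ereal (2 powr (\<gamma>+1)) * sup_power \<beta> \<gamma> \<phi> w"
    by (simp add: B_def x_def)
qed

lemma sup_power_le_ratio:
  assumes g: "\<gamma> > 0" and phi: "\<forall>z\<in>disc. cmod (\<phi> z) < 1"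
  shows "sup_power \<beta> \<gamma> \<phi> w \<le> ereal ((2 * max \<gamma> 1) powr \<gamma>) * sup_ratio \<beta> \<gamma> \<phi> w"
  unfolding sup_power_def
proof (rule SUP_least)
  fix n :: nat assume "n \<in> UNIV"
  define K where "K = (2 * max \<gamma> 1) powr \<gamma>"
  have "ereal ((real n+1) powr \<gamma>) * nu_norm \<beta> (\<lambda>z. w z * \<phi> z ^n) =
     (SUP z\<in>disc. ereal ((real n+1) powr \<gamma>) * ereal ((1 - (cmod z)^2) powr \<beta> * cmod (w z * \<phi> z ^ n)))"
    unfolding nu_norm_def by (rule SUP_ereal_mult_left[symmetric]) (auto simp: disc_ne)
  also have "\<dots> \<le> ereal K * sup_ratio \<beta> \<gamma> \<phi> w"
  proof (rule SUP_least)
    fix z assume z: "z \<in> disc"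
    define x where "x = cmod (\<phi> z)"
    have x0: "0 \<le> x" "x < 1" using phi z by (auto simp: x_def)
    define B where "B = (1 - (cmod z)^2) powr \<beta> * cmod (w z)"
    have B0: "B \<ge> 0" unfolding B_def by simp
    have "(real n+1) powr \<gamma> * ((1 - (cmod z)^2) powr \<beta> * cmod (w z * \<phi> z ^ n)) = B * ((real n+1) powr \<gamma> * x^n)"
      by (simp add: B_def x_def norm_mult norm_power)
    also have "\<dots> \<le> B * (K * (1-x^2) powr (-\<gamma>))"
      unfolding K_def using powlemA_upper[OF g x0] B0 by (rule mult_left_mono)
    also have "\<dots> = K * (B / (1 - x^2) powr \<gamma>)" by (simp add: powr_minus divide_inverse)
    finally have r: "(real n+1) powr \<gamma> * ((1 - (cmod z)^2) powr \<beta> * cmod (w z * \<phi> z ^ n)) \<le> K * (B / (1 - x^2) powr \<gamma>)" .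
    have sr: "ereal (B / (1 - x^2) powr \<gamma>) \<le> sup_ratio \<beta> \<gamma> \<phi> w"
      unfolding sup_ratio_def by (rule SUP_upper2[OF z]) (simp add: B_def x_def)
    have "ereal ((real n+1) powr \<gamma>) * ereal ((1 - (cmod z)^2) powr \<beta> * cmod (w z * \<phi> z ^ n)) \<le> ereal K * ereal (B / (1 - x^2) powr \<gamma>)"
      using r by simp
    also have "\<dots> \<le> ereal K * sup_ratio \<beta> \<gamma> \<phi> w"
      by (intro ereal_mult_le_helper sr) (simp add: K_def)
    finally show "ereal ((real n+1) powr \<gamma>) * ereal ((1 - (cmod z)^2) powr \<beta> * cmod (w z * \<phi> z ^ n)) \<le> ereal K * sup_ratio \<beta> \<gamma> \<phi> w" .
  qed
  finally show "ereal ((real n+1) powr \<gamma>) * nu_norm \<beta> (\<lambda>z. w z * \<phi> z ^n) \<le> ereal ((2 * max \<gamma> 1) powr \<gamma>) * sup_ratio \<beta> \<gamma> \<phi> w"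
    by (simp add: K_def)
qed

lemma sup_ratio_nonneg: "sup_ratio \<beta> \<gamma> \<phi> w \<ge> 0"
  unfolding sup_ratio_def
  by (rule SUP_upper2[of 0]) (auto simp: disc_def)

lemma sup_power_nonneg: "sup_power \<beta> \<gamma> \<phi> w \<ge> 0"
proof -
  have "nu_norm \<beta> (\<lambda>z. w z * \<phi> z ^ 0) \<ge> 0" unfolding nu_norm_def
    by (rule SUP_upper2[of 0]) (auto simp: disc_def)
  then show ?thesis unfolding sup_power_def
    by (intro SUP_upper2[of 0]) auto
qed

definition KK :: "real \<Rightarrow> real" where "KK \<gamma> = 2 powr (\<gamma>+1) + (2 * max \<gamma> 1) powr \<gamma>"

lemma equiv_both:
  assumes g: "\<gamma> > 0" and phi: "\<forall>z\<in>disc. cmod (\<phi> z) < 1" and C: "C \<ge> KK \<gamma>"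
  shows "sup_ratio \<beta> \<gamma> \<phi> w \<le> ereal C * sup_power \<beta> \<gamma> \<phi> w"
    and "sup_power \<beta> \<gamma> \<phi> w \<le> ereal C * sup_ratio \<beta> \<gamma> \<phi> w"
proof -
  have k1: "2 powr (\<gamma>+1) \<le> C" and k2: "(2 * max \<gamma> 1) powr \<gamma> \<le> C" using C unfolding KK_def
    by (smt (verit) powr_ge_zero)+
  show "sup_ratio \<beta> \<gamma> \<phi> w \<le> ereal C * sup_power \<beta> \<gamma> \<phi> w"
    using sup_ratio_le_power[OF g phi, of \<beta> w] ereal_mult_right_mono[OF _ sup_power_nonneg, of "ereal (2 powr (\<gamma>+1))" "ereal C"] k1
    by (meson ereal_less_eq(3) order_trans)
  show "sup_power \<beta> \<gamma> \<phi> w \<le> ereal C * sup_ratio \<beta> \<gamma> \<phi> w"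
    using sup_power_le_ratio[OF g phi, of \<beta> w] ereal_mult_right_mono[OF _ sup_ratio_nonneg, of "ereal ((2 * max \<gamma> 1) powr \<gamma>)" "ereal C"] k2
    by (meson ereal_less_eq(3) order_trans)
qed



lemma open_disc: "open disc" by (simp add: disc_def)

lemma hol_der: "g holomorphic_on disc \<Longrightarrow> z \<in> disc \<Longrightarrow> (g has_field_derivative deriv g z) (at z)"
  by (rule holomorphic_derivI[OF _ open_disc])

lemma hol_der2: "g holomorphic_on disc \<Longrightarrow> z \<in> disc \<Longrightarrow> (deriv g has_field_derivative deriv (deriv g) z) (at z)"
  by (rule holomorphic_derivI[OF holomorphic_deriv[OF _ open_disc] open_disc])

lemma deriv2_from:
  assumes S: "open S" "y \<in> S"
    and d1: "\<And>x. x \<in> S \<Longrightarrow> (f has_field_derivative f1 x) (at x)"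
    and d2: "(f1 has_field_derivative v) (at y)"
  shows "deriv (deriv f) y = v"
proof -
  have "eventually (\<lambda>x. deriv f x = f1 x) (nhds y)"
    using S by (intro eventually_nhds_in_open[THEN eventually_mono]) (auto intro: DERIV_imp_deriv d1)
  then have "deriv (deriv f) y = deriv f1 y" by (rule deriv_cong_ev) simp
  also have "\<dots> = v" using d2 by (rule DERIV_imp_deriv)
  finally show ?thesis .
qed

lemma self_map_lt: "self_map \<phi> \<Longrightarrow> z \<in> disc \<Longrightarrow> \<phi> z \<in> disc"
  unfolding self_map_def by auto

lemma wco_hol:
  assumes u: "u holomorphic_on disc" and f: "f holomorphic_on disc" and p: "self_map \<phi>"
  shows "wco u \<phi> f holomorphic_on disc"
proof -
  have "(f \<circ> \<phi>) holomorphic_on disc"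
    using p f unfolding self_map_def by (intro holomorphic_on_compose_gen) auto
  then show ?thesis unfolding wco_def using u by (auto intro!: holomorphic_on_mult simp: o_def)
qed

lemma wco_der1:
  assumes u: "u holomorphic_on disc" and f: "f holomorphic_on disc" and p: "self_map \<phi>" and z: "z \<in> disc"
  shows "(wco u \<phi> f has_field_derivative (deriv u z * f (\<phi> z) + u z * (deriv f (\<phi> z) * deriv \<phi> z))) (at z)"
proof -
  have ph: "\<phi> holomorphic_on disc" using p by (simp add: self_map_def)
  have pz: "\<phi> z \<in> disc" using self_map_lt[OF p z] .
  have "((\<lambda>z. f (\<phi> z)) has_field_derivative deriv f (\<phi> z) * deriv \<phi> z) (at z)"
    by (rule DERIV_chain2[OF hol_der[OF f pz] hol_der[OF ph z]])
  then show ?thesis unfolding wco_def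
    using hol_der[OF u z] by (auto intro!: derivative_eq_intros)
qed

lemma wco_deriv1:
  assumes u: "u holomorphic_on disc" and f: "f holomorphic_on disc" and p: "self_map \<phi>" and z: "z \<in> disc"
  shows "deriv (wco u \<phi> f) z = deriv u z * f (\<phi> z) + u z * (deriv f (\<phi> z) * deriv \<phi> z)"
  by (rule DERIV_imp_deriv[OF wco_der1[OF assms]])

lemma wco_deriv2:
  assumes u: "u holomorphic_on disc" and f: "f holomorphic_on disc" and p: "self_map \<phi>" and z: "z \<in> disc"
  shows "deriv (deriv (wco u \<phi> f)) z = W3 u z * f (\<phi> z) + W1 u \<phi> z * deriv f (\<phi> z) + W2 u \<phi> z * deriv (deriv f) (\<phi> z)"
proof -
  have ph: "\<phi> holomorphic_on disc" using p by (simp add: self_map_def)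
  have pz: "\<phi> z \<in> disc" using self_map_lt[OF p z] .
  have c0: "((\<lambda>z. f (\<phi> z)) has_field_derivative deriv f (\<phi> z) * deriv \<phi> z) (at z)"
    by (rule DERIV_chain2[OF hol_der[OF f pz] hol_der[OF ph z]])
  have c1: "((\<lambda>z. deriv f (\<phi> z)) has_field_derivative deriv (deriv f) (\<phi> z) * deriv \<phi> z) (at z)"
    by (rule DERIV_chain2[OF hol_der2[OF f pz] hol_der[OF ph z]])
  have e1: "((\<lambda>y. deriv u y * f (\<phi> y)) has_field_derivative (deriv (deriv u) z * f (\<phi> z) + deriv u z * (deriv f (\<phi> z) * deriv \<phi> z))) (at z)"
    using DERIV_mult[OF hol_der2[OF u z] c0] by (simp add: algebra_simps)
  have e2: "((\<lambda>y. u y * (deriv f (\<phi> y) * deriv \<phi> y)) has_field_derivative (deriv u z * (deriv f (\<phi> z) * deriv \<phi> z) + u z * (deriv (deriv f) (\<phi> z) * deriv \<phi> z * deriv \<phi> z + deriv f (\<phi> z) * deriv (deriv \<phi>) z))) (at z)"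
    using DERIV_mult[OF hol_der[OF u z] DERIV_mult[OF c1 hol_der2[OF ph z]]] by (simp add: algebra_simps)
  have "((\<lambda>y. deriv u y * f (\<phi> y) + u y * (deriv f (\<phi> y) * deriv \<phi> y)) has_field_derivative
        (deriv (deriv u) z * f (\<phi> z) + deriv u z * (deriv f (\<phi> z) * deriv \<phi> z)
         + (deriv u z * (deriv f (\<phi> z) * deriv \<phi> z) + u z * (deriv (deriv f) (\<phi> z) * deriv \<phi> z * deriv \<phi> z + deriv f (\<phi> z) * deriv (deriv \<phi>) z)))) (at z)"
    by (rule DERIV_add[OF e1 e2])
  note dd = this
  have "deriv (deriv (wco u \<phi> f)) z = deriv (deriv u) z * f (\<phi> z) + deriv u z * (deriv f (\<phi> z) * deriv \<phi> z)
         + (deriv u z * (deriv f (\<phi> z) * deriv \<phi> z) + u z * (deriv (deriv f) (\<phi> z) * deriv \<phi> z * deriv \<phi> z + deriv f (\<phi> z) * deriv (deriv \<phi>) z))"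
    by (rule deriv2_from[OF open_disc z wco_der1[OF u f p] dd])
  then show ?thesis unfolding W1_def W2_def W3_def by (simp add: algebra_simps power2_eq_square)
qed



definition T :: "real \<Rightarrow> complex \<Rightarrow> complex \<Rightarrow> complex" where
  "T s a w = (1 - cnj a * w) powr (- of_real s)"

lemma T_base:
  assumes a: "cmod a \<le> 1" and w: "cmod w < 1"
  shows "Re (1 - cnj a * w) > 0" "1 - cnj a * w \<notin> \<real>\<^sub>\<le>\<^sub>0" "cmod (1 - cnj a * w) \<ge> 1 - cmod a * cmod w"
    "1 - cmod a * cmod w > 0"
proof -
  have n: "cmod (cnj a * w) < 1" using a w by (simp add: norm_mult) (smt (verit) mult_left_le_one_le norm_ge_zero)
  have "Re (cnj a * w) \<le> cmod (cnj a * w)" by (rule complex_Re_le_cmod)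
  then show r: "Re (1 - cnj a * w) > 0" using n by simp
  then show "1 - cnj a * w \<notin> \<real>\<^sub>\<le>\<^sub>0" by (auto simp: complex_nonpos_Reals_iff)
  show "cmod (1 - cnj a * w) \<ge> 1 - cmod a * cmod w"
    using norm_triangle_ineq2[of 1 "cnj a * w"] by (simp add: norm_mult)
  show "1 - cmod a * cmod w > 0" using n by (simp add: norm_mult)
qed

lemma T_der:
  assumes a: "cmod a \<le> 1" and w: "cmod w < 1" and t: "t = s + 1"
  shows "(T s a has_field_derivative (of_real s * cnj a * T t a w)) (at w)"
proof -
  have nz: "1 - cnj a * w \<notin> \<real>\<^sub>\<le>\<^sub>0" using T_base[OF a w] by blast
  have "((\<lambda>w. (1 - cnj a * w) powr (- of_real s)) has_field_derivative
      ((- of_real s) * (1 - cnj a * w) powr (- of_real s - 1) * (- cnj a))) (at w)"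
    by (rule DERIV_chain2[where f="\<lambda>z. z powr (- of_real s)" and g="\<lambda>w. 1 - cnj a * w" and x=w, OF has_field_derivative_powr[OF nz]])
       (auto intro!: derivative_eq_intros)
  moreover have ex: "- complex_of_real s - 1 = - complex_of_real t" using t by simp
  moreover have "(- of_real s) * (1 - cnj a * w) powr (- of_real s - 1) * (- cnj a) = of_real s * cnj a * T t a w"
    unfolding T_def ex by (simp add: algebra_simps)
  ultimately show ?thesis unfolding T_def[abs_def] by (simp add: mult_ac)
qed

lemma T_hol: assumes "cmod a \<le> 1" shows "T s a holomorphic_on disc"
  unfolding holomorphic_on_open[OF open_disc]
proof (intro ballI exI)
  fix x assume "x \<in> disc"
  then show "(T s a has_field_derivative (of_real s * cnj a * T (s+1) a x)) (at x)"
    by (intro T_der[OF assms _ refl]) (simp add: disc_iff)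
qed

lemma T_norm: "cmod (T s a w) = cmod (1 - cnj a * w) powr (- s)"
  unfolding T_def by (simp add: norm_powr_real_powr')

lemma T_at_a:
  assumes "cmod a < 1" shows "T s a a = of_real ((1 - (cmod a)^2) powr (- s))"
proof -
  have "1 - cnj a * a = of_real (1 - (cmod a)^2)"
    using complex_norm_square[of a] by (simp add: mult.commute)
  moreover have "0 \<le> 1 - (cmod a)^2" using assms by (simp add: abs_square_le_1 less_imp_le)
  ultimately show ?thesis unfolding T_def by (simp add: powr_of_real[symmetric])
qed

lemma T_at_0: "T s a 0 = 1" unfolding T_def by simp

lemma T_bound:
  fixes k :: nat
  assumes a: "cmod a < 1" and w: "cmod w < 1" and al: "\<alpha> \<ge> 0"
  shows "(1 - (cmod a)^2)^k * ((1 - (cmod w)^2) powr \<alpha> * cmod (T (\<alpha> + k) a w)) \<le> 2 powr (\<alpha> + k)"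
proof -
  define d where "d = cmod (1 - cnj a * w)"
  have b: "d \<ge> 1 - cmod a * cmod w" "1 - cmod a * cmod w > 0" using T_base[of a w] a w by (auto simp: d_def)
  have d0: "d > 0" using b by simp
  have e1: "1 - (cmod a)^2 \<le> 2 * d"
  proof -
    have "cmod a * cmod w \<le> cmod a" using w by (intro mult_right_le_one_le) auto
    moreover have "1 - (cmod a)^2 \<le> 2 * (1 - cmod a)"
    proof -
      have "1 - (cmod a)^2 = (1 - cmod a) * (1 + cmod a)" by (simp add: power2_eq_square algebra_simps)
      also have "\<dots> \<le> (1 - cmod a) * 2" using a by (intro mult_left_mono) auto
      finally show ?thesis by simp
    qed
    ultimately show ?thesis using b by (smt (verit))
  qed
  have e2: "1 - (cmod w)^2 \<le> 2 * d"
  proof -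
    have "cmod a * cmod w \<le> cmod w" using a by (intro mult_left_le_one_le) auto
    moreover have "1 - (cmod w)^2 \<le> 2 * (1 - cmod w)"
    proof -
      have "1 - (cmod w)^2 = (1 - cmod w) * (1 + cmod w)" by (simp add: power2_eq_square algebra_simps)
      also have "\<dots> \<le> (1 - cmod w) * 2" using w by (intro mult_left_mono) auto
      finally show ?thesis by simp
    qed
    ultimately show ?thesis using b by (smt (verit))
  qed
  have a0: "0 \<le> 1 - (cmod a)^2" using a by (simp add: abs_square_le_1 less_imp_le)
  have w0: "0 \<le> 1 - (cmod w)^2" using w by (simp add: abs_square_le_1 less_imp_le)
  have "(1 - (cmod a)^2)^k \<le> (2*d)^k" using e1 a0 by (intro power_mono) auto
  moreover have "(1 - (cmod w)^2) powr \<alpha> \<le> (2*d) powr \<alpha>" using e2 w0 al by (intro powr_mono2) auto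
  ultimately have "(1 - (cmod a)^2)^k * ((1 - (cmod w)^2) powr \<alpha> * cmod (T (\<alpha> + k) a w))
      \<le> (2*d)^k * ((2*d) powr \<alpha> * d powr (- (\<alpha> + k)))"
    using a0 by (intro mult_mono) (auto simp: T_norm d_def)
  also have "\<dots> = 2 powr (\<alpha> + k)"
  proof -
    have "(2*d)^k = (2*d) powr (real k)" using d0 by (simp add: powr_realpow)
    then have "(2*d)^k * ((2*d) powr \<alpha> * d powr (- (\<alpha> + k))) = (2*d) powr (\<alpha> + k) * d powr (- (\<alpha> + k))"
      by (simp add: powr_add algebra_simps)
    also have "\<dots> = 2 powr (\<alpha> + k) * (d powr (\<alpha> + k) * d powr (- (\<alpha> + k)))"
      using d0 by (simp add: powr_mult mult_ac)
    also have "\<dots> = 2 powr (\<alpha> + k)"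
    proof -
      have "d powr (\<alpha> + k) * d powr (- (\<alpha> + k)) = 1"
        using d0 by (simp add: powr_add[symmetric])
      then show ?thesis by simp
    qed
    finally show ?thesis .
  qed
  finally show ?thesis .
qed



definition AA :: "complex \<Rightarrow> real" where "AA a = 1 - (cmod a)^2"

definition hh :: "real \<Rightarrow> real \<Rightarrow> real \<Rightarrow> real \<Rightarrow> complex \<Rightarrow> complex \<Rightarrow> complex" where
  "hh p c0 c1 c2 a w = of_real c0 * T p a w + of_real (c1 * AA a) * T (p+1) a w + of_real (c2 * AA a ^ 2) * T (p+2) a w"

definition hh1 :: "real \<Rightarrow> real \<Rightarrow> real \<Rightarrow> real \<Rightarrow> complex \<Rightarrow> complex \<Rightarrow> complex" where
  "hh1 p c0 c1 c2 a w = of_real c0 * (of_real p * cnj a * T (p+1) a w) + of_real (c1 * AA a) * (of_real (p+1) * cnj a * T (p+2) a w)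
     + of_real (c2 * AA a ^ 2) * (of_real (p+2) * cnj a * T (p+3) a w)"

definition hh2 :: "real \<Rightarrow> real \<Rightarrow> real \<Rightarrow> real \<Rightarrow> complex \<Rightarrow> complex \<Rightarrow> complex" where
  "hh2 p c0 c1 c2 a w = of_real c0 * (of_real p * cnj a * (of_real (p+1) * cnj a * T (p+2) a w))
     + of_real (c1 * AA a) * (of_real (p+1) * cnj a * (of_real (p+2) * cnj a * T (p+3) a w))
     + of_real (c2 * AA a ^ 2) * (of_real (p+2) * cnj a * (of_real (p+3) * cnj a * T (p+4) a w))"

lemma hh_der:
  assumes a: "cmod a \<le> 1" and w: "cmod w < 1"
  shows "(hh p c0 c1 c2 a has_field_derivative hh1 p c0 c1 c2 a w) (at w)"
proof -
  have d0: "(T p a has_field_derivative (of_real p * cnj a * T (p+1) a w)) (at w)" by (rule T_der[OF a w]) auto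
  have d1: "(T (p+1) a has_field_derivative (of_real (p+1) * cnj a * T (p+2) a w)) (at w)" by (rule T_der[OF a w]) auto
  have d2: "(T (p+2) a has_field_derivative (of_real (p+2) * cnj a * T (p+3) a w)) (at w)" by (rule T_der[OF a w]) auto
  show ?thesis unfolding hh_def[abs_def] hh1_def
    by (intro DERIV_add DERIV_cmult d0 d1 d2)
qed

lemma hh1_der:
  assumes a: "cmod a \<le> 1" and w: "cmod w < 1"
  shows "(hh1 p c0 c1 c2 a has_field_derivative hh2 p c0 c1 c2 a w) (at w)"
proof -
  have d1: "(T (p+1) a has_field_derivative (of_real (p+1) * cnj a * T (p+2) a w)) (at w)" by (rule T_der[OF a w]) auto
  have d2: "(T (p+2) a has_field_derivative (of_real (p+2) * cnj a * T (p+3) a w)) (at w)" by (rule T_der[OF a w]) auto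
  have d3: "(T (p+3) a has_field_derivative (of_real (p+3) * cnj a * T (p+4) a w)) (at w)" by (rule T_der[OF a w]) auto
  show ?thesis unfolding hh1_def[abs_def] hh2_def
    by (intro DERIV_add DERIV_cmult d1 d2 d3)
qed

lemma hh_hol: assumes "cmod a \<le> 1" shows "hh p c0 c1 c2 a holomorphic_on disc"
  unfolding holomorphic_on_open[OF open_disc]
proof (intro ballI exI)
  fix x assume "x \<in> disc"
  then show "(hh p c0 c1 c2 a has_field_derivative hh1 p c0 c1 c2 a x) (at x)"
    by (intro hh_der[OF assms]) (simp add: disc_iff)
qed

lemma hh_deriv1: "cmod a \<le> 1 \<Longrightarrow> cmod w < 1 \<Longrightarrow> deriv (hh p c0 c1 c2 a) w = hh1 p c0 c1 c2 a w"
  by (rule DERIV_imp_deriv[OF hh_der])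

lemma hh_deriv2: "cmod a \<le> 1 \<Longrightarrow> cmod w < 1 \<Longrightarrow> deriv (deriv (hh p c0 c1 c2 a)) w = hh2 p c0 c1 c2 a w"
  by (rule deriv2_from[OF open_disc, of w]) (auto simp: disc_iff intro: hh_der hh1_der)

lemma powr_shift:
  fixes A p :: real assumes "A > 0"
  shows "A powr (-(p + real k)) = A powr (-p) / A^k"
proof -
  have "A powr (-(p + real k)) = A powr (-p) * A powr (- real k)" by (simp add: powr_add[symmetric])
  also have "A powr (- real k) = inverse (A ^ k)" using assms by (simp add: powr_minus powr_realpow)
  finally show ?thesis by (simp add: divide_inverse)
qed

lemma hh_vals:
  assumes a: "cmod a < 1"
  shows "hh p c0 c1 c2 a a = of_real ((c0 + c1 + c2) * AA a powr (-p))"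
    and "hh1 p c0 c1 c2 a a = cnj a * of_real ((c0*p + c1*(p+1) + c2*(p+2)) * AA a powr (-p-1))"
    and "hh2 p c0 c1 c2 a a = cnj a ^ 2 * of_real ((c0*p*(p+1) + c1*(p+1)*(p+2) + c2*(p+2)*(p+3)) * AA a powr (-p-2))"
proof -
  define A where "A = AA a"
  have A0: "A > 0" unfolding A_def AA_def using a by (simp add: abs_square_less_1)
  define B where "B = A powr (-p)"
  have t0: "T p a a = of_real B" unfolding B_def A_def AA_def using T_at_a[OF a] by simp
  have t1: "T (p+1) a a = of_real (B / A)" unfolding B_def A_def using T_at_a[OF a] powr_shift[OF A0, of p 1] by (simp add: AA_def A_def)
  have t2: "T (p+2) a a = of_real (B / A^2)" unfolding B_def using T_at_a[OF a] powr_shift[OF A0, of p 2] by (simp add: AA_def A_def)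
  have t3: "T (p+3) a a = of_real (B / A^3)" unfolding B_def using T_at_a[OF a] powr_shift[OF A0, of p 3] by (simp add: AA_def A_def)
  have t4: "T (p+4) a a = of_real (B / A^4)" unfolding B_def using T_at_a[OF a] powr_shift[OF A0, of p 4] by (simp add: AA_def A_def)
  have s1: "A powr (-p-1) = B / A" unfolding B_def using powr_shift[OF A0, of p 1] by simp
  have s2: "A powr (-p-2) = B / A^2" unfolding B_def using powr_shift[OF A0, of p 2] by simp
  have r0: "c0*B + c1*A*(B/A) + c2*A^2*(B/A^2) = (c0+c1+c2)*B" using A0 by (simp add: field_simps power2_eq_square)
  have r1: "c0*(p*(B/A)) + c1*A*((p+1)*(B/A^2)) + c2*A^2*((p+2)*(B/A^3)) = (c0*p + c1*(p+1) + c2*(p+2)) * (B/A)"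
    using A0 by (simp add: field_simps power2_eq_square power3_eq_cube)
  have r2: "c0*(p*((p+1)*(B/A^2))) + c1*A*((p+1)*((p+2)*(B/A^3))) + c2*A^2*((p+2)*((p+3)*(B/A^4))) = (c0*p*(p+1) + c1*(p+1)*(p+2) + c2*(p+2)*(p+3)) * (B/A^2)"
    using A0 by (simp add: field_simps power2_eq_square power3_eq_cube power4_eq_xxxx)
  have "hh p c0 c1 c2 a a = of_real (c0*B + c1*A*(B/A) + c2*A^2*(B/A^2))"
    unfolding hh_def t0 t1 t2 A_def[symmetric] by simp
  then show "hh p c0 c1 c2 a a = of_real ((c0 + c1 + c2) * AA a powr (-p))"
    unfolding r0 by (simp add: B_def A_def)
  have "hh1 p c0 c1 c2 a a = cnj a * of_real (c0*(p*(B/A)) + c1*A*((p+1)*(B/A^2)) + c2*A^2*((p+2)*(B/A^3)))"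
    unfolding hh1_def t1 t2 t3 A_def[symmetric] using A0 by (simp add: field_simps)
  then show "hh1 p c0 c1 c2 a a = cnj a * of_real ((c0*p + c1*(p+1) + c2*(p+2)) * AA a powr (-p-1))"
    unfolding r1 A_def[symmetric] by (simp add: s1)
  have "hh2 p c0 c1 c2 a a = cnj a ^ 2 * of_real (c0*(p*((p+1)*(B/A^2))) + c1*A*((p+1)*((p+2)*(B/A^3))) + c2*A^2*((p+2)*((p+3)*(B/A^4))))"
    unfolding hh2_def t2 t3 t4 A_def[symmetric] using A0 by (simp add: field_simps power2_eq_square)
  then show "hh2 p c0 c1 c2 a a = cnj a ^ 2 * of_real ((c0*p*(p+1) + c1*(p+1)*(p+2) + c2*(p+2)*(p+3)) * AA a powr (-p-2))"
    unfolding r2 A_def[symmetric] by (simp add: s2)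
qed



definition SB :: "real \<Rightarrow> real \<Rightarrow> real \<Rightarrow> real \<Rightarrow> real" where
  "SB p c0 c1 c2 = \<bar>c0\<bar> * p * 2 powr (p+1) + \<bar>c1\<bar> * (p+1) * 2 powr (p+2) + \<bar>c2\<bar> * (p+2) * 2 powr (p+3)"

definition NB :: "real \<Rightarrow> real \<Rightarrow> real \<Rightarrow> real \<Rightarrow> real" where
  "NB p c0 c1 c2 = \<bar>c0\<bar> + \<bar>c1\<bar> + \<bar>c2\<bar> + SB p c0 c1 c2"

lemma norm3: "cmod (x + y + z) \<le> cmod x + cmod y + cmod z"
  by (metis add_mono norm_triangle_ineq order_refl order_trans)

lemma term_bound:
  fixes k :: nat
  assumes q: "q \<ge> 0" and a: "cmod a \<le> 1" and A: "0 \<le> A" and W: "0 \<le> W"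
    and b: "A^k * (W * cmod X) \<le> B"
  shows "W * cmod (of_real (c * A^k) * (of_real q * cnj a * X)) \<le> \<bar>c\<bar> * q * B"
proof -
  have e: "W * cmod (of_real (c * A^k) * (of_real q * cnj a * X)) = (\<bar>c\<bar> * q) * (cmod a * (A^k * (W * cmod X)))"
  proof -
    have n1: "cmod (of_real (c * A^k) :: complex) = \<bar>c\<bar> * A^k" using A by (simp add: abs_mult norm_mult norm_power)
    have n2: "cmod (of_real q :: complex) = q" using q by simp
    have "cmod (of_real (c*A^k) * (of_real q * cnj a * X)) = \<bar>c\<bar> * A^k * (q * cmod a * cmod X)"
      by (simp only: norm_mult n1 n2 complex_mod_cnj)
    then show ?thesis by (simp add: mult_ac)
  qed
  have B0: "0 \<le> B" using b A W by (meson order_trans zero_le_mult_iff zero_le_power norm_ge_zero)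
  have "cmod a * (A^k * (W * cmod X)) \<le> 1 * B" using a b B0 A W by (intro mult_mono) auto
  then show ?thesis unfolding e using q by (intro mult_left_mono) auto
qed

lemma hh_bloch:
  assumes p: "p \<ge> 0" and a: "cmod a < 1"
  shows "hh p c0 c1 c2 a \<in> bloch_space (p+1)"
    and "bloch_norm (p+1) (hh p c0 c1 c2 a) \<le> ereal (NB p c0 c1 c2)"
proof -
  have a1: "cmod a \<le> 1" using a by simp
  define A where "A = AA a"
  have A0: "0 \<le> A" and A1: "A \<le> 1" unfolding A_def AA_def using a by (auto simp: abs_square_le_1 less_imp_le)
  have pt: "(1 - (cmod w)^2) powr (p+1) * cmod (deriv (hh p c0 c1 c2 a) w) \<le> SB p c0 c1 c2" if w: "w \<in> disc" for w
  proof -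
    have w1: "cmod w < 1" using w by (simp add: disc_iff)
    define W where "W = (1 - (cmod w)^2) powr (p+1)"
    have W0: "0 \<le> W" unfolding W_def by simp
    have tb0: "A^0 * (W * cmod (T (p+1) a w)) \<le> 2 powr (p+1)"
      using T_bound[OF a w1, of "p+1" 0] p by (simp add: A_def AA_def W_def)
    have tb1: "A^1 * (W * cmod (T (p+2) a w)) \<le> 2 powr (p+2)"
      using T_bound[OF a w1, of "p+1" 1] p by (simp add: A_def AA_def W_def add.assoc)
    have tb2: "A^2 * (W * cmod (T (p+3) a w)) \<le> 2 powr (p+3)"
      using T_bound[OF a w1, of "p+1" 2] p by (simp add: A_def AA_def W_def add.assoc)
    have i0: "W * cmod (of_real c0 * (of_real p * cnj a * T (p+1) a w)) \<le> \<bar>c0\<bar> * p * 2 powr (p+1)"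
      using term_bound[OF p a1 A0 W0 tb0, of c0] by simp
    have i1: "W * cmod (of_real (c1 * A) * (of_real (p+1) * cnj a * T (p+2) a w)) \<le> \<bar>c1\<bar> * (p+1) * 2 powr (p+2)"
      using term_bound[OF _ a1 A0 W0 tb1, of "p+1" c1] p by simp
    have i2: "W * cmod (of_real (c2 * A^2) * (of_real (p+2) * cnj a * T (p+3) a w)) \<le> \<bar>c2\<bar> * (p+2) * 2 powr (p+3)"
      using term_bound[OF _ a1 A0 W0 tb2, of "p+2" c2] p by simp
    have "W * cmod (hh1 p c0 c1 c2 a w) \<le> W * (cmod (of_real c0 * (of_real p * cnj a * T (p+1) a w))
         + cmod (of_real (c1 * A) * (of_real (p+1) * cnj a * T (p+2) a w))
         + cmod (of_real (c2 * A^2) * (of_real (p+2) * cnj a * T (p+3) a w)))"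
      unfolding hh1_def A_def using W0 by (intro mult_left_mono norm3) auto
    also have "\<dots> \<le> SB p c0 c1 c2" using i0 i1 i2 unfolding SB_def by (simp add: algebra_simps)
    finally show ?thesis using hh_deriv1[OF a1 w1] by (simp add: W_def)
  qed
  have sem: "bloch_seminorm (p+1) (hh p c0 c1 c2 a) \<le> ereal (SB p c0 c1 c2)"
    unfolding bloch_seminorm_def by (rule SUP_least) (use pt in simp)
  show "hh p c0 c1 c2 a \<in> bloch_space (p+1)"
    unfolding bloch_space_def using hh_hol[OF a1] sem by (auto intro: le_less_trans)
  have h0: "cmod (hh p c0 c1 c2 a 0) \<le> \<bar>c0\<bar> + \<bar>c1\<bar> + \<bar>c2\<bar>"
  proof -
    have "cmod (hh p c0 c1 c2 a 0) \<le> \<bar>c0\<bar> + \<bar>c1\<bar> * A + \<bar>c2\<bar> * A^2"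
      unfolding hh_def T_at_0 A_def[symmetric] using norm3[of "of_real c0" "of_real (c1*A)" "of_real (c2*A^2)"] A0
      by (simp add: abs_mult norm_mult norm_power)
    also have "\<dots> \<le> \<bar>c0\<bar> + \<bar>c1\<bar> + \<bar>c2\<bar>"
    proof -
      have "\<bar>c1\<bar> * A \<le> \<bar>c1\<bar>" using A0 A1 by (simp add: mult_left_le)
      moreover have "\<bar>c2\<bar> * A^2 \<le> \<bar>c2\<bar>" using A0 A1 by (simp add: mult_left_le power_le_one)
      ultimately show ?thesis by simp
    qed
    finally show ?thesis .
  qed
  show "bloch_norm (p+1) (hh p c0 c1 c2 a) \<le> ereal (NB p c0 c1 c2)"
    unfolding bloch_norm_def NB_def using add_mono[OF _ sem, of "ereal (cmod (hh p c0 c1 c2 a 0))" "ereal (\<bar>c0\<bar> + \<bar>c1\<bar> + \<bar>c2\<bar>)"] h0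
    by simp
qed



lemma growth2:
  assumes f: "f holomorphic_on disc"
    and bd: "\<forall>x\<in>disc. (1 - (cmod x)^2) powr \<alpha> * cmod (deriv f x) \<le> s"
    and al: "\<alpha> > 0" and s: "s \<ge> 0" and w: "w \<in> disc"
  shows "cmod (deriv (deriv f) w) \<le> s * 4 powr (\<alpha>+1) * (1 - (cmod w)^2) powr (-\<alpha>-1)"
proof -
  have w1: "cmod w < 1" using w by (simp add: disc_iff)
  define r where "r = (1 - cmod w)/2"
  have r0: "r > 0" using w1 by (simp add: r_def)
  have cb: "cball w r \<subseteq> disc"
  proof
    fix x assume "x \<in> cball w r"
    then have "cmod (x - w) \<le> r" by (simp add: dist_norm norm_minus_commute)
    moreover have "cmod x \<le> cmod w + cmod (x - w)" by (metis add.commute diff_add_cancel norm_triangle_ineq)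
    ultimately show "x \<in> disc" using w1 by (simp add: disc_iff r_def)
  qed
  have hd: "deriv f holomorphic_on disc" by (rule holomorphic_deriv[OF f open_disc])
  have hol: "deriv f holomorphic_on ball w r" using hd cb ball_subset_cball by (meson holomorphic_on_subset order_trans)
  have cont: "continuous_on (cball w r) (deriv f)"
    using holomorphic_on_imp_continuous_on[OF hd] cb continuous_on_subset by blast
  have nof: "cmod (deriv f x) \<le> s * r powr (-\<alpha>)" if x: "cmod (w - x) = r" for x
  proof -
    have xd: "x \<in> cball w r" using x by (simp add: dist_norm)
    then have xin: "x \<in> disc" using cb by blast
    have x1: "cmod x < 1" using xin by (simp add: disc_iff)
    have "cmod x \<le> cmod w + cmod (w - x)" by (metis add.commute diff_add_cancel norm_minus_commute norm_triangle_ineq)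
    then have xr: "cmod x \<le> cmod w + r" using x by simp
    define y where "y = (cmod x)^2"
    have "y \<le> cmod x" using x1 unfolding y_def by (simp add: power2_eq_square mult_left_le_one_le)
    then have "r \<le> 1 - y" using xr unfolding r_def by argo
    then have rx: "r \<le> 1 - (cmod x)^2" by (simp add: y_def)
    have E: "r powr \<alpha> \<le> (1 - (cmod x)^2) powr \<alpha>" using rx r0 al by (intro powr_mono2) auto
    have "r powr \<alpha> * cmod (deriv f x) \<le> (1 - (cmod x)^2) powr \<alpha> * cmod (deriv f x)"
      using E by (intro mult_right_mono) auto
    also have "\<dots> \<le> s" using bd xin by blast
    finally have "r powr \<alpha> * cmod (deriv f x) \<le> s" .
    then show ?thesis using r0 by (simp add: powr_minus field_simps)
  qed
  have "cmod ((deriv ^^ 1) (deriv f) w) \<le> fact 1 * (s * r powr (-\<alpha>)) / r^1"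
    by (rule Cauchy_inequality[OF hol cont r0]) (use nof in auto)
  moreover have "r powr (-\<alpha>-1) = r powr (-\<alpha>) / r" using r0 by (simp add: powr_diff)
  ultimately have c: "cmod (deriv (deriv f) w) \<le> s * r powr (-\<alpha>-1)" by simp
  have rr: "(1 - (cmod w)^2)/4 \<le> r"
  proof -
    have "(1 - (cmod w)^2) = (1 - cmod w) * (1 + cmod w)" by (simp add: power2_eq_square algebra_simps)
    also have "\<dots> \<le> (1 - cmod w) * 2" using w1 by (intro mult_left_mono) auto
    finally show ?thesis by (simp add: r_def)
  qed
  have wp: "0 < 1 - (cmod w)^2" using w1 by (simp add: abs_square_less_1)
  have "r powr (-\<alpha>-1) \<le> ((1 - (cmod w)^2)/4) powr (-\<alpha>-1)"
    using rr wp al by (intro powr_mono2') auto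
  also have "\<dots> = (1 - (cmod w)^2) powr (-\<alpha>-1) / 4 powr (-\<alpha>-1)" using wp by (simp add: powr_divide)
  also have "4 powr (-\<alpha>-1) = inverse (4 powr (\<alpha>+1))"
  proof -
    have "(4::real) powr (-(\<alpha>+1)) = inverse (4 powr (\<alpha>+1))" by (rule powr_minus)
    then show ?thesis by simp
  qed
  also have "(1 - (cmod w)^2) powr (-\<alpha>-1) / inverse (4 powr (\<alpha>+1)) = 4 powr (\<alpha>+1) * (1 - (cmod w)^2) powr (-\<alpha>-1)"
    by (simp add: divide_inverse)
  finally have "r powr (-\<alpha>-1) \<le> 4 powr (\<alpha>+1) * (1 - (cmod w)^2) powr (-\<alpha>-1)" .
  then have "s * r powr (-\<alpha>-1) \<le> s * (4 powr (\<alpha>+1) * (1 - (cmod w)^2) powr (-\<alpha>-1))"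
    using s by (rule mult_left_mono)
  with c show ?thesis by (simp add: mult_ac)
qed

lemma seg_cnj:
  assumes "w \<noteq> 0"
  shows "cnj (w / of_real (cmod w)) * (of_real t * w) = of_real (t * cmod w)"
proof -
  have "cnj w * w = of_real ((cmod w)^2)" using complex_norm_square[of w] by (simp add: mult.commute)
  then show ?thesis using assms by (simp add: field_simps power2_eq_square)
qed

lemma T_on_seg:
  assumes "w \<noteq> 0" "t * cmod w < 1"
  shows "T s (w / of_real (cmod w)) (of_real t * w) = of_real ((1 - t * cmod w) powr (-s))"
proof -
  have "1 - cnj (w / of_real (cmod w)) * (of_real t * w) = of_real (1 - t * cmod w)"
    using seg_cnj[OF assms(1), of t] by simp
  then show ?thesis unfolding T_def using assms(2) by (simp add: powr_of_real[symmetric])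
qed

lemma growth0_diff:
  assumes f: "f holomorphic_on disc"
    and bd: "\<forall>x\<in>disc. (1 - (cmod x)^2) powr \<alpha> * cmod (deriv f x) \<le> s"
    and al: "\<alpha> > 1" and s: "s \<ge> 0" and w: "w \<in> disc"
  shows "cmod (f w - f 0) \<le> s/(\<alpha>-1) * (1 - cmod w) powr (1-\<alpha>)"
proof (cases "w = 0 \<or> f w = f 0")
  case True
  then show ?thesis using s al by auto
next
  case False
  then have w0: "w \<noteq> 0" and d0: "f w - f 0 \<noteq> 0" by auto
  have w1: "cmod w < 1" using w by (simp add: disc_iff)
  define d where "d = f w - f 0"
  define \<omega> where "\<omega> = w / of_real (cmod w)"
  have om: "cmod \<omega> = 1" using w0 by (simp add: \<omega>_def norm_divide)
  define e where "e = d / of_real (cmod d)"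
  define g where "g = (\<lambda>\<zeta>. of_real (s/(\<alpha>-1)) * T (\<alpha>-1) \<omega> \<zeta>)"
  define F where "F = (\<lambda>\<zeta>. cnj e * f \<zeta> - g \<zeta>)"
  define F' where "F' = (\<lambda>\<zeta>. cnj e * deriv f \<zeta> - of_real (s/(\<alpha>-1)) * (of_real (\<alpha>-1) * cnj \<omega> * T \<alpha> \<omega> \<zeta>))"
  have seg: "closed_segment 0 w \<subseteq> disc"
    by (rule closed_segment_subset) (use w in \<open>auto simp: disc_def\<close>)
  have der: "(F has_field_derivative F' u) (at u)" if u: "u \<in> closed_segment 0 w" for u
  proof -
    have ud: "u \<in> disc" using u seg by blast
    have u1: "cmod u < 1" using ud by (simp add: disc_iff)
    show ?thesis unfolding F_def g_def F'_def
      by (rule DERIV_diff[OF DERIV_cmult[OF hol_der[OF f ud]] DERIV_cmult[OF T_der[of \<omega> u \<alpha> "\<alpha>-1"]]])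
         (use om u1 in auto)
  qed
  obtain u where u: "u \<in> closed_segment 0 w" "Re (F w) - Re (F 0) = Re (F' u * (w - 0))"
    using complex_mvt_line[of 0 w F F'] der by blast
  from u(1) obtain t where t: "0 \<le> t" "t \<le> 1" "u = of_real t * w"
    unfolding closed_segment_def by (auto simp: scaleR_conv_of_real)
  have "t * cmod w \<le> cmod w" using t by (intro mult_left_le_one_le) auto
  then have tw: "t * cmod w < 1" using w1 by simp
  have tw0: "0 \<le> t * cmod w" using t by simp
  have ud: "u \<in> disc" using u(1) seg by blast
  have Tu: "T \<alpha> \<omega> u = of_real ((1 - t*cmod w) powr (-\<alpha>))"
    unfolding \<omega>_def t(3) by (rule T_on_seg[OF w0 tw])
  have cw: "cnj \<omega> * w = of_real (cmod w)" using seg_cnj[OF w0, of 1] by (simp add: \<omega>_def)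
  have gpart: "of_real (s/(\<alpha>-1)) * (of_real (\<alpha>-1) * cnj \<omega> * T \<alpha> \<omega> u) * w = of_real (s * (1 - t*cmod w) powr (-\<alpha>) * cmod w)"
  proof -
    have "of_real (s/(\<alpha>-1)) * (of_real (\<alpha>-1) * cnj \<omega> * T \<alpha> \<omega> u) * w = of_real (s/(\<alpha>-1) * (\<alpha>-1)) * T \<alpha> \<omega> u * (cnj \<omega> * w)"
      by (simp add: mult_ac)
    also have "\<dots> = of_real s * T \<alpha> \<omega> u * of_real (cmod w)" using al cw by simp
    finally show ?thesis by (simp add: Tu)
  qed
  have cu: "cmod u = t * cmod w" using t by (simp add: norm_mult)
  have fu: "cmod (deriv f u) \<le> s * (1 - t*cmod w) powr (-\<alpha>)"
  proof -
    have p0: "0 < 1 - t * cmod w" using tw by simp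
    have "(cmod u)^2 \<le> cmod u" using cu tw tw0 by (simp add: power2_eq_square mult_left_le_one_le)
    then have le: "1 - t * cmod w \<le> 1 - (cmod u)^2" using cu by simp
    have "(1 - t*cmod w) powr \<alpha> * cmod (deriv f u) \<le> (1 - (cmod u)^2) powr \<alpha> * cmod (deriv f u)"
      using le p0 al by (intro mult_right_mono powr_mono2) auto
    also have "\<dots> \<le> s" using bd ud by blast
    finally have "(1 - t*cmod w) powr \<alpha> * cmod (deriv f u) \<le> s" .
    then show ?thesis using p0 by (simp add: powr_minus field_simps)
  qed
  have ce: "cmod e = 1" using d0 by (simp add: e_def d_def norm_divide)
  have "Re (cnj e * deriv f u * w) \<le> cmod (cnj e * deriv f u * w)" by (rule complex_Re_le_cmod)
  also have "\<dots> = cmod (deriv f u) * cmod w" using ce by (simp add: norm_mult)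
  also have "\<dots> \<le> s * (1 - t*cmod w) powr (-\<alpha>) * cmod w" using fu by (intro mult_right_mono) auto
  finally have fp: "Re (cnj e * deriv f u * w) \<le> s * (1 - t*cmod w) powr (-\<alpha>) * cmod w" .
  have "Re (F' u * w) = Re (cnj e * deriv f u * w) - s * (1 - t*cmod w) powr (-\<alpha>) * cmod w"
    using gpart unfolding F'_def by (simp add: left_diff_distrib)
  with fp u(2) have neg: "Re (F w) - Re (F 0) \<le> 0" by simp
  have gw: "g w = of_real (s/(\<alpha>-1) * (1 - cmod w) powr (1-\<alpha>))"
    using T_on_seg[OF w0, of 1 "\<alpha>-1"] w1 by (simp add: g_def \<omega>_def)
  have g0: "g 0 = of_real (s/(\<alpha>-1))" by (simp add: g_def T_at_0)
  have ed: "cnj e * d = of_real (cmod d)"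
  proof -
    have "cnj d * d = of_real ((cmod d)^2)" using complex_norm_square[of d] by (simp add: mult.commute)
    then show ?thesis using d0 by (simp add: e_def d_def field_simps power2_eq_square)
  qed
  have "Re (F w) - Re (F 0) = Re (cnj e * d) - (Re (g w) - Re (g 0))"
    unfolding F_def d_def by (simp add: right_diff_distrib)
  also have "\<dots> = cmod d - (s/(\<alpha>-1) * (1 - cmod w) powr (1-\<alpha>) - s/(\<alpha>-1))"
    by (simp add: ed gw g0)
  finally have "cmod d \<le> s/(\<alpha>-1) * (1 - cmod w) powr (1-\<alpha>) - s/(\<alpha>-1)" using neg by simp
  also have "\<dots> \<le> s/(\<alpha>-1) * (1 - cmod w) powr (1-\<alpha>)" using s al by simp
  finally show ?thesis by (simp add: d_def)
qed

lemma growth0: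
  assumes f: "f holomorphic_on disc"
    and bd: "\<forall>x\<in>disc. (1 - (cmod x)^2) powr \<alpha> * cmod (deriv f x) \<le> s"
    and al: "\<alpha> > 1" and s: "s \<ge> 0" and w: "w \<in> disc"
  shows "cmod (f w) \<le> (cmod (f 0) + s * (2 powr (\<alpha>-1) / (\<alpha>-1))) * (1 - (cmod w)^2) powr (1-\<alpha>)"
proof -
  have w1: "cmod w < 1" using w by (simp add: disc_iff)
  define P where "P = (1 - (cmod w)^2) powr (1-\<alpha>)"
  have wp: "0 < 1 - (cmod w)^2" using w1 by (simp add: abs_square_less_1)
  have P1: "1 \<le> P"
  proof -
    have "1 powr (1-\<alpha>) \<le> (1 - (cmod w)^2) powr (1-\<alpha>)" using wp al by (intro powr_mono2') auto
    then show ?thesis by (simp add: P_def)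
  qed
  have q: "(1 - cmod w) powr (1-\<alpha>) \<le> 2 powr (\<alpha>-1) * P"
  proof -
    have "(1 - (cmod w)^2) \<le> 2 * (1 - cmod w)"
    proof -
      have "(1 - (cmod w)^2) = (1 - cmod w) * (1 + cmod w)" by (simp add: power2_eq_square algebra_simps)
      also have "\<dots> \<le> (1 - cmod w) * 2" using w1 by (intro mult_left_mono) auto
      finally show ?thesis by simp
    qed
    then have "(2 * (1 - cmod w)) powr (1-\<alpha>) \<le> P" unfolding P_def using wp al by (intro powr_mono2') auto
    moreover have m: "(2 * (1 - cmod w)) powr (1-\<alpha>) = 2 powr (1-\<alpha>) * (1 - cmod w) powr (1-\<alpha>)"
      using w1 powr_mult[of 2 "1 - cmod w" "1-\<alpha>"] by simp
    ultimately have "2 powr (1-\<alpha>) * (1 - cmod w) powr (1-\<alpha>) \<le> P" by simp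
    moreover have e1: "2 powr (\<alpha>-1) * 2 powr (1-\<alpha>) = 1" by (simp add: powr_add[symmetric])
    ultimately have "2 powr (\<alpha>-1) * (2 powr (1-\<alpha>) * (1 - cmod w) powr (1-\<alpha>)) \<le> 2 powr (\<alpha>-1) * P"
      by (intro mult_left_mono) auto
    moreover have "2 powr (\<alpha>-1) * (2 powr (1-\<alpha>) * (1 - cmod w) powr (1-\<alpha>)) = (1 - cmod w) powr (1-\<alpha>)"
      using e1 by (simp add: mult.assoc[symmetric])
    ultimately show ?thesis by simp
  qed
  have "cmod (f w) \<le> cmod (f 0) + cmod (f w - f 0)" by (metis add.commute diff_add_cancel norm_triangle_ineq)
  also have "\<dots> \<le> cmod (f 0) + s/(\<alpha>-1) * (1 - cmod w) powr (1-\<alpha>)"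
    using growth0_diff[OF f bd al s w] by simp
  also have "\<dots> \<le> cmod (f 0) * P + s/(\<alpha>-1) * (2 powr (\<alpha>-1) * P)"
  proof (rule add_mono)
    show "cmod (f 0) \<le> cmod (f 0) * P" using P1 by (simp add: mult_le_cancel_left1)
    show "s/(\<alpha>-1) * (1 - cmod w) powr (1-\<alpha>) \<le> s/(\<alpha>-1) * (2 powr (\<alpha>-1) * P)"
      using q s al by (intro mult_left_mono) auto
  qed
  also have "\<dots> = (cmod (f 0) + s * (2 powr (\<alpha>-1) / (\<alpha>-1))) * P" by (simp add: algebra_simps)
  finally show ?thesis by (simp add: P_def)
qed



lemma bloch_facts:
  assumes "f \<in> bloch_space \<alpha>"
  shows "f holomorphic_on disc"
    and "\<forall>x\<in>disc. (1 - (cmod x)^2) powr \<alpha> * cmod (deriv f x) \<le> real_of_ereal (bloch_seminorm \<alpha> f)"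
    and "real_of_ereal (bloch_seminorm \<alpha> f) \<ge> 0"
    and "bloch_norm \<alpha> f = ereal (cmod (f 0) + real_of_ereal (bloch_seminorm \<alpha> f))"
proof -
  define S where "S = bloch_seminorm \<alpha> f"
  show "f holomorphic_on disc" using assms by (simp add: bloch_space_def)
  have fin: "S < \<infinity>" using assms by (simp add: bloch_space_def S_def)
  have up: "ereal ((1 - (cmod x)^2) powr \<alpha> * cmod (deriv f x)) \<le> S" if "x \<in> disc" for x
    unfolding S_def bloch_seminorm_def by (rule SUP_upper2[OF that]) simp
  have u0: "ereal (cmod (deriv f 0)) \<le> S" using up[of 0] by (simp add: disc_def)
  have S0: "S \<ge> 0" by (rule order_trans[OF _ u0]) simp
  have Sr: "S = ereal (real_of_ereal S)" using fin S0 by (cases S) auto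
  show "\<forall>x\<in>disc. (1 - (cmod x)^2) powr \<alpha> * cmod (deriv f x) \<le> real_of_ereal (bloch_seminorm \<alpha> f)"
    using up Sr unfolding S_def by (metis ereal_less_eq(3))
  show "real_of_ereal (bloch_seminorm \<alpha> f) \<ge> 0" using S0 unfolding S_def by (simp add: real_of_ereal_pos)
  show "bloch_norm \<alpha> f = ereal (cmod (f 0) + real_of_ereal (bloch_seminorm \<alpha> f))"
    unfolding bloch_norm_def using Sr unfolding S_def by (metis plus_ereal.simps(1))
qed

lemma ratio_facts:
  assumes "sup_ratio \<beta> \<gamma> \<phi> w < \<infinity>"
  shows "\<forall>z\<in>disc. (1 - (cmod z)^2) powr \<beta> * cmod (w z) / (1 - (cmod (\<phi> z))^2) powr \<gamma> \<le> real_of_ereal (sup_ratio \<beta> \<gamma> \<phi> w)"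
    and "real_of_ereal (sup_ratio \<beta> \<gamma> \<phi> w) \<ge> 0"
proof -
  define S where "S = sup_ratio \<beta> \<gamma> \<phi> w"
  have S0: "S \<ge> 0" using sup_ratio_nonneg unfolding S_def by blast
  have Sr: "S = ereal (real_of_ereal S)" using assms S0 unfolding S_def[symmetric] by (cases S) auto
  have up: "ereal ((1 - (cmod z)^2) powr \<beta> * cmod (w z) / (1 - (cmod (\<phi> z))^2) powr \<gamma>) \<le> S" if "z \<in> disc" for z
    unfolding S_def sup_ratio_def by (rule SUP_upper2[OF that]) simp
  show "\<forall>z\<in>disc. (1 - (cmod z)^2) powr \<beta> * cmod (w z) / (1 - (cmod (\<phi> z))^2) powr \<gamma> \<le> real_of_ereal (sup_ratio \<beta> \<gamma> \<phi> w)"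
    using up Sr unfolding S_def by (metis ereal_less_eq(3))
  show "real_of_ereal (sup_ratio \<beta> \<gamma> \<phi> w) \<ge> 0" using S0 unfolding S_def by (simp add: real_of_ereal_pos)
qed

lemma ratio_to_mult:
  fixes X A g M :: real
  assumes "X / A powr g \<le> M" "A > 0"
  shows "X \<le> M * A powr g"
proof -
  have "A powr g > 0" using assms(2) by simp
  then show ?thesis using assms(1) by (simp add: pos_divide_le_eq)
qed

lemma prodb:
  fixes X Y M K A g :: real
  assumes "0 \<le> X" "X \<le> M * A powr g" "0 \<le> Y" "Y \<le> K * A powr (-g)" "A > 0" "M \<ge> 0"
  shows "X * Y \<le> M * K"
proof -
  have "X * Y \<le> (M * A powr g) * (K * A powr (-g))"
    using assms by (intro mult_mono) auto
  also have "\<dots> = M * K" using assms(5) by (simp add: powr_minus field_simps)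
  finally show ?thesis .
qed

lemma suff:
  assumes al: "\<alpha> > 1" and u: "u holomorphic_on disc" and p: "self_map \<phi>"
    and r1: "sup_ratio \<beta> \<alpha> \<phi> (W1 u \<phi>) < \<infinity>"
    and r2: "sup_ratio \<beta> (\<alpha>+1) \<phi> (W2 u \<phi>) < \<infinity>"
    and r3: "sup_ratio \<beta> (\<alpha>-1) \<phi> (W3 u) < \<infinity>"
  shows "bounded_wco_bloch_zyg \<alpha> \<beta> u \<phi>"
proof -
  define M1 where "M1 = real_of_ereal (sup_ratio \<beta> \<alpha> \<phi> (W1 u \<phi>))"
  define M2 where "M2 = real_of_ereal (sup_ratio \<beta> (\<alpha>+1) \<phi> (W2 u \<phi>))"
  define M3 where "M3 = real_of_ereal (sup_ratio \<beta> (\<alpha>-1) \<phi> (W3 u))"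
  have m1: "\<forall>z\<in>disc. (1 - (cmod z)^2) powr \<beta> * cmod (W1 u \<phi> z) / (1 - (cmod (\<phi> z))^2) powr \<alpha> \<le> M1" "M1 \<ge> 0"
    using ratio_facts[OF r1] unfolding M1_def by auto
  have m2: "\<forall>z\<in>disc. (1 - (cmod z)^2) powr \<beta> * cmod (W2 u \<phi> z) / (1 - (cmod (\<phi> z))^2) powr (\<alpha>+1) \<le> M2" "M2 \<ge> 0"
    using ratio_facts[OF r2] unfolding M2_def by auto
  have m3: "\<forall>z\<in>disc. (1 - (cmod z)^2) powr \<beta> * cmod (W3 u z) / (1 - (cmod (\<phi> z))^2) powr (\<alpha>-1) \<le> M3" "M3 \<ge> 0"
    using ratio_facts[OF r3] unfolding M3_def by auto
  define K0 where "K0 = 2 powr (\<alpha>-1) / (\<alpha>-1)"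
  define K2 where "K2 = 4 powr (\<alpha>+1)"
  have K00: "K0 \<ge> 0" and K20: "K2 \<ge> 0" using al by (auto simp: K0_def K2_def)
  have ph: "\<phi> holomorphic_on disc" using p by (simp add: self_map_def)
  have z0: "0 \<in> disc" by (simp add: disc_def)
  have pz0: "\<phi> 0 \<in> disc" using self_map_lt[OF p z0] .
  define P0 where "P0 = (1 - (cmod (\<phi> 0))^2) powr (1-\<alpha>)"
  define Q0 where "Q0 = (1 - (cmod (\<phi> 0))^2) powr (-\<alpha>)"
  define Cz where "Cz = M3 * (1 + K0) + M1 + M2 * K2"
  define C where "C = Cz + cmod (u 0) * (1 + K0) * P0 + cmod (deriv u 0) * (1 + K0) * P0 + cmod (u 0) * cmod (deriv \<phi> 0) * Q0"
  have Cz0: "Cz \<ge> 0" using m1 m2 m3 K00 K20 by (simp add: Cz_def)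
  show ?thesis unfolding bounded_wco_bloch_zyg_def
  proof (intro exI[of _ C] ballI conjI)
    fix f assume fB: "f \<in> bloch_space \<alpha>"
    note bf = bloch_facts[OF fB]
    define s where "s = real_of_ereal (bloch_seminorm \<alpha> f)"
    have hf: "f holomorphic_on disc" and bd: "\<forall>x\<in>disc. (1 - (cmod x)^2) powr \<alpha> * cmod (deriv f x) \<le> s"
      and s0: "s \<ge> 0" using bf unfolding s_def by auto
    define N where "N = cmod (f 0) + s"
    have N0: "N \<ge> 0" using s0 by (simp add: N_def)
    have bn: "bloch_norm \<alpha> f = ereal N" using bf unfolding N_def s_def by simp
    have G0: "cmod (f w) \<le> (1 + K0) * N * (1 - (cmod w)^2) powr (1-\<alpha>)" if w: "w \<in> disc" for w
    proof -
      have "cmod (f w) \<le> (cmod (f 0) + s * K0) * (1 - (cmod w)^2) powr (1-\<alpha>)"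
        using growth0[OF hf bd al s0 w] by (simp add: K0_def)
      also have "\<dots> \<le> (1 + K0) * N * (1 - (cmod w)^2) powr (1-\<alpha>)"
      proof (intro mult_right_mono)
        show "cmod (f 0) + s * K0 \<le> (1 + K0) * N" using K00 s0 by (simp add: N_def algebra_simps)
      qed simp
      finally show ?thesis .
    qed
    have G1: "cmod (deriv f w) \<le> s * (1 - (cmod w)^2) powr (-\<alpha>)" if w: "w \<in> disc" for w
    proof -
      have wp: "0 < 1 - (cmod w)^2" using w by (simp add: disc_iff abs_square_less_1)
      have "(1 - (cmod w)^2) powr \<alpha> * cmod (deriv f w) \<le> s" using bd w by blast
      then show ?thesis using wp by (simp add: powr_minus field_simps)
    qed
    have G2: "cmod (deriv (deriv f) w) \<le> s * K2 * (1 - (cmod w)^2) powr (-\<alpha>-1)" if w: "w \<in> disc" for w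
      using growth2[OF hf bd _ s0 w] al by (simp add: K2_def)
    have hol: "wco u \<phi> f holomorphic_on disc" by (rule wco_hol[OF u hf p])
    have pt: "(1 - (cmod z)^2) powr \<beta> * cmod (deriv (deriv (wco u \<phi> f)) z) \<le> Cz * N" if z: "z \<in> disc" for z
    proof -
      define a where "a = \<phi> z"
      have ad: "a \<in> disc" using self_map_lt[OF p z] by (simp add: a_def)
      define A where "A = 1 - (cmod a)^2"
      have A0: "A > 0" using ad by (simp add: A_def disc_iff abs_square_less_1)
      define Wt where "Wt = (1 - (cmod z)^2) powr \<beta>"
      have Wt0: "Wt \<ge> 0" by (simp add: Wt_def)
      have b3: "Wt * cmod (W3 u z) \<le> M3 * A powr (\<alpha>-1)"
        using ratio_to_mult[OF _ A0] m3 z by (simp add: Wt_def A_def a_def)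
      have b1: "Wt * cmod (W1 u \<phi> z) \<le> M1 * A powr \<alpha>"
        using ratio_to_mult[OF _ A0] m1 z by (simp add: Wt_def A_def a_def)
      have b2: "Wt * cmod (W2 u \<phi> z) \<le> M2 * A powr (\<alpha>+1)"
        using ratio_to_mult[OF _ A0] m2 z by (simp add: Wt_def A_def a_def)
      have t3: "(Wt * cmod (W3 u z)) * cmod (f a) \<le> M3 * ((1 + K0) * N)"
        by (rule prodb[OF _ b3 _ _ A0 m3(2)]) (use G0[OF ad] Wt0 in \<open>auto simp: A_def\<close>)
      have t1: "(Wt * cmod (W1 u \<phi> z)) * cmod (deriv f a) \<le> M1 * s"
        by (rule prodb[OF _ b1 _ _ A0 m1(2)]) (use G1[OF ad] Wt0 in \<open>auto simp: A_def\<close>)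
      have t2: "(Wt * cmod (W2 u \<phi> z)) * cmod (deriv (deriv f) a) \<le> M2 * (s * K2)"
        by (rule prodb[OF _ b2 _ _ A0 m2(2)]) (use G2[OF ad] Wt0 in \<open>auto simp: A_def\<close>)
      have "Wt * cmod (deriv (deriv (wco u \<phi> f)) z) \<le> Wt * (cmod (W3 u z * f a) + cmod (W1 u \<phi> z * deriv f a) + cmod (W2 u \<phi> z * deriv (deriv f) a))"
        unfolding wco_deriv2[OF u hf p z] a_def using Wt0 by (intro mult_left_mono norm3) auto
      also have "\<dots> = (Wt * cmod (W3 u z)) * cmod (f a) + (Wt * cmod (W1 u \<phi> z)) * cmod (deriv f a) + (Wt * cmod (W2 u \<phi> z)) * cmod (deriv (deriv f) a)"
        by (simp add: norm_mult algebra_simps)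
      also have "\<dots> \<le> M3 * ((1 + K0) * N) + M1 * s + M2 * (s * K2)" using t1 t2 t3 by simp
      also have "\<dots> \<le> Cz * N"
      proof -
        have "M1 * s \<le> M1 * N" using m1 by (auto simp: N_def intro!: mult_left_mono)
        moreover have "s * K2 \<le> K2 * N" using K20 by (simp add: N_def algebra_simps)
        then have "M2 * (s * K2) \<le> M2 * (K2 * N)" using m2 by (intro mult_left_mono) auto
        ultimately have "M1 * s \<le> M1 * N" "M2 * (s * K2) \<le> M2 * K2 * N" by (simp_all add: mult_ac)
        then show ?thesis by (simp add: Cz_def algebra_simps)
      qed
      finally show ?thesis by (simp add: Wt_def)
    qed
    have zs: "zyg_seminorm \<beta> (wco u \<phi> f) \<le> ereal (Cz * N)"
      unfolding zyg_seminorm_def by (rule SUP_least) (use pt in simp)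
    then show "wco u \<phi> f \<in> zygmund_space \<beta>" unfolding zygmund_space_def using hol by (auto intro: le_less_trans)
    have v0: "cmod (wco u \<phi> f 0) \<le> cmod (u 0) * (1 + K0) * P0 * N"
    proof -
      have "cmod (wco u \<phi> f 0) = cmod (u 0) * cmod (f (\<phi> 0))" by (simp add: wco_def norm_mult)
      also have "\<dots> \<le> cmod (u 0) * ((1 + K0) * N * P0)" using G0[OF pz0] by (intro mult_left_mono) (auto simp: P0_def)
      finally show ?thesis by (simp add: mult_ac)
    qed
    have v1: "cmod (deriv (wco u \<phi> f) 0) \<le> (cmod (deriv u 0) * (1 + K0) * P0 + cmod (u 0) * cmod (deriv \<phi> 0) * Q0) * N"
    proof -
      have "cmod (deriv (wco u \<phi> f) 0) \<le> cmod (deriv u 0 * f (\<phi> 0)) + cmod (u 0 * (deriv f (\<phi> 0) * deriv \<phi> 0))"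
        unfolding wco_deriv1[OF u hf p z0] by (rule norm_triangle_ineq)
      also have "\<dots> = cmod (deriv u 0) * cmod (f (\<phi> 0)) + cmod (u 0) * cmod (deriv \<phi> 0) * cmod (deriv f (\<phi> 0))"
        by (simp add: norm_mult mult_ac)
      also have "\<dots> \<le> cmod (deriv u 0) * ((1 + K0) * N * P0) + cmod (u 0) * cmod (deriv \<phi> 0) * (s * Q0)"
        using G0[OF pz0] G1[OF pz0] by (intro add_mono mult_left_mono) (auto simp: P0_def Q0_def)
      also have "\<dots> \<le> cmod (deriv u 0) * ((1 + K0) * N * P0) + cmod (u 0) * cmod (deriv \<phi> 0) * (N * Q0)"
        using s0 K00 by (intro add_mono mult_left_mono mult_right_mono) (auto simp: N_def Q0_def)
      finally show ?thesis by (simp add: algebra_simps)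
    qed
    have "zyg_norm \<beta> (wco u \<phi> f) \<le> ereal (cmod (u 0) * (1 + K0) * P0 * N) + ereal ((cmod (deriv u 0) * (1 + K0) * P0 + cmod (u 0) * cmod (deriv \<phi> 0) * Q0) * N) + ereal (Cz * N)"
      unfolding zyg_norm_def using v0 v1 zs by (intro add_mono) auto
    also have "\<dots> = ereal (C * N)" by (simp add: C_def algebra_simps)
    finally show "zyg_norm \<beta> (wco u \<phi> f) \<le> ereal C * bloch_norm \<alpha> f" by (simp add: bn)
  qed
qed



lemma zyg_le_norm: "zyg_seminorm \<beta> g \<le> zyg_norm \<beta> g"
  unfolding zyg_norm_def by (intro add_increasing) auto

lemma bloch_norm_nonneg: "bloch_norm \<alpha> f \<ge> 0"
proof -
  have "bloch_seminorm \<alpha> f \<ge> 0" unfolding bloch_seminorm_def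
    by (rule SUP_upper2[of 0]) (auto simp: disc_def)
  then show ?thesis unfolding bloch_norm_def by simp
qed

lemma key_bound:
  assumes C: "\<forall>f\<in>bloch_space \<alpha>. wco u \<phi> f \<in> zygmund_space \<beta> \<and> zyg_norm \<beta> (wco u \<phi> f) \<le> ereal C * bloch_norm \<alpha> f"
    and f: "f \<in> bloch_space \<alpha>" and N: "bloch_norm \<alpha> f \<le> ereal N" and z: "z \<in> disc"
  shows "(1 - (cmod z)^2) powr \<beta> * cmod (deriv (deriv (wco u \<phi> f)) z) \<le> max C 0 * N"
proof -
  define D where "D = max C 0"
  have D0: "0 \<le> D" and CD: "C \<le> D" by (simp_all add: D_def)
  have "ereal ((1 - (cmod z)^2) powr \<beta> * cmod (deriv (deriv (wco u \<phi> f)) z)) \<le> zyg_seminorm \<beta> (wco u \<phi> f)"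
    unfolding zyg_seminorm_def by (rule SUP_upper2[OF z]) simp
  also have "\<dots> \<le> zyg_norm \<beta> (wco u \<phi> f)" by (rule zyg_le_norm)
  also have "\<dots> \<le> ereal C * bloch_norm \<alpha> f" using C f by blast
  also have "\<dots> \<le> ereal D * bloch_norm \<alpha> f"
    by (rule ereal_mult_right_mono) (use CD in \<open>auto simp: bloch_norm_nonneg\<close>)
  also have "\<dots> \<le> ereal D * ereal N"
    by (rule ereal_mult_left_mono[OF N]) (use D0 in auto)
  also have "\<dots> = ereal (D * N)" by simp
  finally have "(1 - (cmod z)^2) powr \<beta> * cmod (deriv (deriv (wco u \<phi> f)) z) \<le> D * N" by simp
  then show ?thesis by (simp add: D_def)
qed

lemma div_powr_eq: "(X::real) / A powr q = X * A powr (-q)"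
  by (simp add: powr_minus divide_inverse)

lemma powr_le1: "(0::real) \<le> x \<Longrightarrow> x \<le> 1 \<Longrightarrow> (0::real) \<le> g \<Longrightarrow> x powr g \<le> 1"
  using powr_mono2[of g x 1] by simp

lemma one_minus_sq: "z \<in> disc \<Longrightarrow> 0 \<le> 1 - (cmod z)^2 \<and> 1 - (cmod z)^2 \<le> 1"
  by (simp add: disc_iff abs_square_le_1 less_imp_le)

lemma poly_bloch:
  assumes al: "\<alpha> \<ge> 0"
  shows "(\<lambda>w. 1) \<in> bloch_space \<alpha>" "bloch_norm \<alpha> (\<lambda>w. 1) \<le> ereal 1"
    and "(\<lambda>w. w) \<in> bloch_space \<alpha>" "bloch_norm \<alpha> (\<lambda>w. w) \<le> ereal 1"
    and "(\<lambda>w. w^2) \<in> bloch_space \<alpha>" "bloch_norm \<alpha> (\<lambda>w. w^2) \<le> ereal 2"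
proof -
  have d0: "deriv (\<lambda>w::complex. 1::complex) = (\<lambda>w. 0)" by (rule ext, rule DERIV_imp_deriv) simp
  have d2: "deriv (\<lambda>w::complex. w^2) = (\<lambda>w. 2 * w)" by (rule ext, rule DERIV_imp_deriv) (auto intro!: derivative_eq_intros)
  have s0: "bloch_seminorm \<alpha> (\<lambda>w. 1) \<le> 0" unfolding bloch_seminorm_def d0 by (rule SUP_least) simp
  have s1: "bloch_seminorm \<alpha> (\<lambda>w. w) \<le> 1" unfolding bloch_seminorm_def
    by (rule SUP_least) (use one_minus_sq al in \<open>auto intro: powr_le1\<close>)
  have s2: "bloch_seminorm \<alpha> (\<lambda>w. w^2) \<le> 2" unfolding bloch_seminorm_def d2
  proof (rule SUP_least)
    fix x assume x: "x \<in> disc"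
    have "(1 - (cmod x)^2) powr \<alpha> * cmod (2 * x) \<le> 1 * 2"
      using one_minus_sq[OF x] x al by (intro mult_mono powr_le1) (auto simp: norm_mult disc_iff)
    then show "ereal ((1 - (cmod x)^2) powr \<alpha> * cmod (2 * x)) \<le> 2" by simp
  qed
  show "(\<lambda>w. 1) \<in> bloch_space \<alpha>" using s0 unfolding bloch_space_def by (auto intro: le_less_trans)
  show "(\<lambda>w. w) \<in> bloch_space \<alpha>" using s1 unfolding bloch_space_def by (auto intro: le_less_trans)
  show "(\<lambda>w. w^2) \<in> bloch_space \<alpha>" using s2 unfolding bloch_space_def by (auto intro!: holomorphic_intros intro: le_less_trans)
  show "bloch_norm \<alpha> (\<lambda>w. 1) \<le> ereal 1" unfolding bloch_norm_def using add_mono[OF order_refl s0, of "ereal 1"] by simp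
  show "bloch_norm \<alpha> (\<lambda>w. w) \<le> ereal 1" unfolding bloch_norm_def using s1 by (simp add: one_ereal_def)
  show "bloch_norm \<alpha> (\<lambda>w. w^2) \<le> ereal 2" unfolding bloch_norm_def using s2 by simp
qed

lemma ratio_split:
  fixes X E E' A g :: real and a :: complex and k :: nat
  assumes X0: "0 \<le> X" and a: "cmod a < 1" and A: "A = 1 - (cmod a)^2" and g: "g \<ge> 0"
    and e1: "X * cmod a ^ k * A powr (-g) \<le> E" and e2: "X \<le> E'"
  shows "X / A powr g \<le> 2^k * E + E' / (3/4) powr g"
proof -
  have A0: "A > 0" using a by (simp add: A abs_square_less_1)
  have E0: "E \<ge> 0" using e1 X0 by (meson order_trans zero_le_mult_iff zero_le_power norm_ge_zero powr_ge_zero)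
  have E'0: "E' \<ge> 0" using e2 X0 by simp
  show ?thesis
  proof (cases "cmod a \<ge> 1/2")
    case True
    have "(1/2)^k \<le> cmod a ^ k" using True by (intro power_mono) auto
    then have "X * (1/2)^k * A powr (-g) \<le> X * cmod a ^ k * A powr (-g)"
      using X0 by (intro mult_right_mono mult_left_mono) auto
    then have "X * (1/2)^k * A powr (-g) \<le> E" using e1 by simp
    then have "X * A powr (-g) \<le> 2^k * E" by (simp add: field_simps power_divide)
    then have "X / A powr g \<le> 2^k * E" by (simp add: powr_minus divide_inverse)
    moreover have "0 \<le> E' / (3/4) powr g" using E'0 by simp
    ultimately show ?thesis by simp
  next
    case False
    have "cmod a * cmod a \<le> (1/2) * (1/2)" using False by (intro mult_mono) auto
    then have "(cmod a)^2 \<le> 1/4" by (simp add: power2_eq_square)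
    then have "3/4 \<le> A" by (simp add: A)
    then have "(3/4) powr g \<le> A powr g" using g by (intro powr_mono2) auto
    moreover have "0 < A powr g * (3/4) powr g" using A0 by simp
    ultimately have "X / A powr g \<le> X / (3/4) powr g" using X0 by (intro divide_left_mono) auto
    also have "\<dots> \<le> E' / (3/4) powr g" using e2 by (intro divide_right_mono) auto
    finally have c: "X / A powr g \<le> E' / (3/4) powr g" .
    show ?thesis by (rule add_increasing[OF _ c]) (use E0 in simp)
  qed
qed

definition cI0 :: "real \<Rightarrow> real \<times> real \<times> real" where
  "cI0 p = (1 + (p^2 + 3*p)/2, -(p^2 + 2*p), (p^2 + p)/2)"

lemma nec:
  assumes al: "\<alpha> > 1" and u: "u holomorphic_on disc" and p: "self_map \<phi>"
    and B: "bounded_wco_bloch_zyg \<alpha> \<beta> u \<phi>"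
  shows "sup_ratio \<beta> \<alpha> \<phi> (W1 u \<phi>) < \<infinity>"
    and "sup_ratio \<beta> (\<alpha>+1) \<phi> (W2 u \<phi>) < \<infinity>"
    and "sup_ratio \<beta> (\<alpha>-1) \<phi> (W3 u) < \<infinity>"
proof -
  obtain C where C: "\<forall>f\<in>bloch_space \<alpha>. wco u \<phi> f \<in> zygmund_space \<beta> \<and> zyg_norm \<beta> (wco u \<phi> f) \<le> ereal C * bloch_norm \<alpha> f"
    using B unfolding bounded_wco_bloch_zyg_def by blast
  define D where "D = max C 0"
  have D0: "D \<ge> 0" by (simp add: D_def)
  note kb = key_bound[OF C, folded D_def]
  define p' where "p' = \<alpha> - 1"
  have p'0: "p' \<ge> 0" using al by (simp add: p'_def)
  have pa: "p' + 1 = \<alpha>" by (simp add: p'_def)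
  note pb = poly_bloch[of \<alpha>]
  have al0: "\<alpha> \<ge> 0" using al by simp
  have dc0: "deriv (\<lambda>w::complex. 1::complex) = (\<lambda>w. 0)" by (rule ext, rule DERIV_imp_deriv) simp
  have dd2: "deriv (\<lambda>w::complex. w^2) = (\<lambda>w. 2 * w)" by (rule ext, rule DERIV_imp_deriv) (auto intro!: derivative_eq_intros)
  have hc: "(\<lambda>w::complex. 1::complex) holomorphic_on disc" by simp
  have hi: "(\<lambda>w::complex. w) holomorphic_on disc" by simp
  have hs: "(\<lambda>w::complex. w^2) holomorphic_on disc" by (auto intro!: holomorphic_intros)
  have dd22: "deriv (\<lambda>w::complex. 2 * w) = (\<lambda>w. 2)" by (rule ext, rule DERIV_imp_deriv) (auto intro!: derivative_eq_intros)
  have P3: "(1 - (cmod z)^2) powr \<beta> * cmod (W3 u z) \<le> D" if z: "z \<in> disc" for z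
    using kb[OF pb(1)[OF al0] pb(2)[OF al0] z] wco_deriv2[OF u hc p z] by (simp add: dc0)
  have P1: "(1 - (cmod z)^2) powr \<beta> * cmod (W1 u \<phi> z) \<le> 2 * D" if z: "z \<in> disc" for z
  proof -
    define Wt where "Wt = (1 - (cmod z)^2) powr \<beta>"
    have a1: "cmod (\<phi> z) \<le> 1" using self_map_lt[OF p z] by (simp add: disc_iff)
    have h: "Wt * cmod (W3 u z * \<phi> z + W1 u \<phi> z) \<le> D"
      using kb[OF pb(3)[OF al0] pb(4)[OF al0] z] wco_deriv2[OF u hi p z] by (simp add: Wt_def)
    have "cmod (W1 u \<phi> z) \<le> cmod (W3 u z * \<phi> z + W1 u \<phi> z) + cmod (W3 u z * \<phi> z)"
      by (metis add_diff_cancel_left' norm_triangle_ineq4 add.commute)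
    also have "\<dots> \<le> cmod (W3 u z * \<phi> z + W1 u \<phi> z) + cmod (W3 u z)"
    proof -
      have "cmod (W3 u z) * cmod (\<phi> z) \<le> cmod (W3 u z)" using a1 by (intro mult_right_le_one_le) auto
      then show ?thesis by (simp add: norm_mult)
    qed
    finally have "Wt * cmod (W1 u \<phi> z) \<le> Wt * cmod (W3 u z * \<phi> z + W1 u \<phi> z) + Wt * cmod (W3 u z)"
      by (metis distrib_left mult_left_mono powr_ge_zero Wt_def)
    also have "\<dots> \<le> D + D" using h P3[OF z] by (simp add: Wt_def)
    finally show ?thesis by (simp add: Wt_def)
  qed
  have P2: "(1 - (cmod z)^2) powr \<beta> * cmod (W2 u \<phi> z) \<le> 4 * D" if z: "z \<in> disc" for z
  proof -
    define Wt where "Wt = (1 - (cmod z)^2) powr \<beta>"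
    define a where "a = \<phi> z"
    have a1: "cmod a \<le> 1" using self_map_lt[OF p z] by (simp add: disc_iff a_def)
    have h: "Wt * cmod (W3 u z * a^2 + W1 u \<phi> z * (2 * a) + W2 u \<phi> z * 2) \<le> D * 2"
      using kb[OF pb(5)[OF al0] pb(6)[OF al0] z] wco_deriv2[OF u hs p z]
      by (simp add: Wt_def a_def dd2 dd22 mult_ac)
    have "cmod (W2 u \<phi> z * 2) \<le> cmod (W3 u z * a^2 + W1 u \<phi> z * (2 * a) + W2 u \<phi> z * 2) + cmod (W3 u z * a^2) + cmod (W1 u \<phi> z * (2 * a))"
      by (smt (verit) add_diff_cancel_left' norm_triangle_ineq4 add.commute norm_triangle_ineq)
    also have "\<dots> \<le> cmod (W3 u z * a^2 + W1 u \<phi> z * (2 * a) + W2 u \<phi> z * 2) + cmod (W3 u z) + 2 * cmod (W1 u \<phi> z)"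
    proof -
      have "cmod a ^ 2 \<le> 1" using a1 by (simp add: power_le_one)
      then have "cmod (W3 u z) * cmod a ^ 2 \<le> cmod (W3 u z)" by (intro mult_right_le_one_le) auto
      then have "cmod (W3 u z * a^2) \<le> cmod (W3 u z)" by (simp add: norm_mult norm_power)
      moreover have "cmod (W1 u \<phi> z) * cmod a \<le> cmod (W1 u \<phi> z)" using a1 by (intro mult_right_le_one_le) auto
      then have "cmod (W1 u \<phi> z * (2 * a)) \<le> 2 * cmod (W1 u \<phi> z)" by (simp add: norm_mult mult.commute)
      ultimately show ?thesis by simp
    qed
    finally have e: "2 * cmod (W2 u \<phi> z) \<le> cmod (W3 u z * a^2 + W1 u \<phi> z * (2 * a) + W2 u \<phi> z * 2) + cmod (W3 u z) + 2 * cmod (W1 u \<phi> z)"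
      by (simp add: norm_mult)
    have Wt0: "Wt \<ge> 0" by (simp add: Wt_def)
    have "Wt * (2 * cmod (W2 u \<phi> z)) \<le> Wt * (cmod (W3 u z * a^2 + W1 u \<phi> z * (2 * a) + W2 u \<phi> z * 2) + cmod (W3 u z) + 2 * cmod (W1 u \<phi> z))"
      using e Wt0 by (rule mult_left_mono)
    also have "\<dots> \<le> D * 2 + D + 2 * (2 * D)" using h P3[OF z] P1[OF z] by (simp add: Wt_def algebra_simps)
    finally show ?thesis using D0 by (simp add: Wt_def)
  qed
  \<comment> \<open>isolation by test functions\<close>
  have iso: "(1 - (cmod z)^2) powr \<beta> * cmod (W3 u z * hh p' c0 c1 c2 (\<phi> z) (\<phi> z) + W1 u \<phi> z * hh1 p' c0 c1 c2 (\<phi> z) (\<phi> z) + W2 u \<phi> z * hh2 p' c0 c1 c2 (\<phi> z) (\<phi> z))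
       \<le> D * NB p' c0 c1 c2" if z: "z \<in> disc" for z c0 c1 c2
  proof -
    have a1: "cmod (\<phi> z) < 1" using self_map_lt[OF p z] by (simp add: disc_iff)
    have hb: "hh p' c0 c1 c2 (\<phi> z) \<in> bloch_space \<alpha>" "bloch_norm \<alpha> (hh p' c0 c1 c2 (\<phi> z)) \<le> ereal (NB p' c0 c1 c2)"
      using hh_bloch[OF p'0 a1, of c0 c1 c2] by (simp_all add: pa)
    have pz: "\<phi> z \<in> disc" using self_map_lt[OF p z] .
    have "deriv (deriv (wco u \<phi> (hh p' c0 c1 c2 (\<phi> z)))) z = W3 u z * hh p' c0 c1 c2 (\<phi> z) (\<phi> z) + W1 u \<phi> z * hh1 p' c0 c1 c2 (\<phi> z) (\<phi> z) + W2 u \<phi> z * hh2 p' c0 c1 c2 (\<phi> z) (\<phi> z)"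
      using wco_deriv2[OF u hh_hol p z, of "\<phi> z" p' c0 c1 c2] hh_deriv1[of "\<phi> z" "\<phi> z" p' c0 c1 c2] hh_deriv2[of "\<phi> z" "\<phi> z" p' c0 c1 c2] a1
      by simp
    then show ?thesis using kb[OF hb z] by simp
  qed
  show "sup_ratio \<beta> (\<alpha>-1) \<phi> (W3 u) < \<infinity>"
  proof -
    define c0 c1 c2 where "c0 = 1 + (p'^2 + 3*p')/2" "c1 = -(p'^2 + 2*p')" "c2 = (p'^2 + p')/2"
    have sums: "c0 + c1 + c2 = 1" "c0*p' + c1*(p'+1) + c2*(p'+2) = 0" "c0*p'*(p'+1) + c1*(p'+1)*(p'+2) + c2*(p'+2)*(p'+3) = 0"
      unfolding c0_c1_c2_def by (auto simp: field_simps power2_eq_square)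
    have "sup_ratio \<beta> (\<alpha>-1) \<phi> (W3 u) \<le> ereal (D * NB p' c0 c1 c2)"
      unfolding sup_ratio_def
    proof (rule SUP_least)
      fix z assume z: "z \<in> disc"
      have a1: "cmod (\<phi> z) < 1" using self_map_lt[OF p z] by (simp add: disc_iff)
      have "(1 - (cmod z)^2) powr \<beta> * cmod (W3 u z * of_real (AA (\<phi> z) powr (-p'))) \<le> D * NB p' c0 c1 c2"
        using iso[OF z, of c0 c1 c2] hh_vals[OF a1, of p' c0 c1 c2] sums by simp
      then have prev: "(1 - (cmod z)^2) powr \<beta> * cmod (W3 u z) * AA (\<phi> z) powr (-p') \<le> D * NB p' c0 c1 c2"
        by (simp add: norm_mult mult_ac)
      have eq: "(1 - (cmod z)^2) powr \<beta> * cmod (W3 u z) / (1 - (cmod (\<phi> z))^2) powr (\<alpha>-1) = (1 - (cmod z)^2) powr \<beta> * cmod (W3 u z) * AA (\<phi> z) powr (-p')"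
        unfolding AA_def p'_def by (rule div_powr_eq)
      have "(1 - (cmod z)^2) powr \<beta> * cmod (W3 u z) / (1 - (cmod (\<phi> z))^2) powr (\<alpha>-1) \<le> D * NB p' c0 c1 c2"
        unfolding eq by (rule prev)
      then show "ereal ((1 - (cmod z)^2) powr \<beta> * cmod (W3 u z) / (1 - (cmod (\<phi> z))^2) powr (\<alpha>-1)) \<le> ereal (D * NB p' c0 c1 c2)"
        by (simp only: ereal_less_eq(3))
    qed
    then show ?thesis by (rule le_less_trans) simp
  qed
  show "sup_ratio \<beta> \<alpha> \<phi> (W1 u \<phi>) < \<infinity>"
  proof -
    define c0 c1 c2 where "c0 = -(p'+2)" "c1 = 2*p'+3" "c2 = -(p'+1)"
    have sums: "c0 + c1 + c2 = 0" "c0*p' + c1*(p'+1) + c2*(p'+2) = 1" "c0*p'*(p'+1) + c1*(p'+1)*(p'+2) + c2*(p'+2)*(p'+3) = 0"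
      unfolding c0_c1_c2_def by (auto simp: field_simps)
    define R where "R = 2^1 * (D * NB p' c0 c1 c2) + 2 * D / (3/4) powr \<alpha>"
    have "sup_ratio \<beta> \<alpha> \<phi> (W1 u \<phi>) \<le> ereal R"
      unfolding sup_ratio_def
    proof (rule SUP_least)
      fix z assume z: "z \<in> disc"
      have a1: "cmod (\<phi> z) < 1" using self_map_lt[OF p z] by (simp add: disc_iff)
      have "(1 - (cmod z)^2) powr \<beta> * cmod (W1 u \<phi> z * (cnj (\<phi> z) * of_real (AA (\<phi> z) powr (-p'-1)))) \<le> D * NB p' c0 c1 c2"
        using iso[OF z, of c0 c1 c2] hh_vals[OF a1, of p' c0 c1 c2] sums by simp
      then have e1: "(1 - (cmod z)^2) powr \<beta> * cmod (W1 u \<phi> z) * cmod (\<phi> z) ^ 1 * AA (\<phi> z) powr (-\<alpha>) \<le> D * NB p' c0 c1 c2"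
        by (simp add: norm_mult mult_ac p'_def)
      have "(1 - (cmod z)^2) powr \<beta> * cmod (W1 u \<phi> z) / (1 - (cmod (\<phi> z))^2) powr \<alpha> \<le> R"
        unfolding R_def by (rule ratio_split[OF _ a1 refl _ e1[unfolded AA_def]]) (use P1[OF z] al in auto)
      then show "ereal ((1 - (cmod z)^2) powr \<beta> * cmod (W1 u \<phi> z) / (1 - (cmod (\<phi> z))^2) powr \<alpha>) \<le> ereal R" by simp
    qed
    then show ?thesis by (rule le_less_trans) simp
  qed
  show "sup_ratio \<beta> (\<alpha>+1) \<phi> (W2 u \<phi>) < \<infinity>"
  proof -
    define c0 c1 c2 where "c0 = (1/2::real)" "c1 = (-1::real)" "c2 = (1/2::real)"
    have sums: "c0 + c1 + c2 = 0" "c0*p' + c1*(p'+1) + c2*(p'+2) = 0" "c0*p'*(p'+1) + c1*(p'+1)*(p'+2) + c2*(p'+2)*(p'+3) = 1"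
      unfolding c0_c1_c2_def by (auto simp: field_simps)
    define R where "R = 2^2 * (D * NB p' c0 c1 c2) + 4 * D / (3/4) powr (\<alpha>+1)"
    have "sup_ratio \<beta> (\<alpha>+1) \<phi> (W2 u \<phi>) \<le> ereal R"
      unfolding sup_ratio_def
    proof (rule SUP_least)
      fix z assume z: "z \<in> disc"
      have a1: "cmod (\<phi> z) < 1" using self_map_lt[OF p z] by (simp add: disc_iff)
      have ex: "-p'-2 = -(\<alpha>+1)" by (simp add: p'_def)
      have "(1 - (cmod z)^2) powr \<beta> * cmod (W2 u \<phi> z * (cnj (\<phi> z) ^ 2 * of_real (AA (\<phi> z) powr (-p'-2)))) \<le> D * NB p' c0 c1 c2"
        using iso[OF z, of c0 c1 c2] hh_vals[OF a1, of p' c0 c1 c2] sums by simp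
      then have e1: "(1 - (cmod z)^2) powr \<beta> * cmod (W2 u \<phi> z) * cmod (\<phi> z) ^ 2 * AA (\<phi> z) powr (-(\<alpha>+1)) \<le> D * NB p' c0 c1 c2"
        using ex by (simp add: norm_mult norm_power mult_ac)
      have "(1 - (cmod z)^2) powr \<beta> * cmod (W2 u \<phi> z) / (1 - (cmod (\<phi> z))^2) powr (\<alpha>+1) \<le> R"
        unfolding R_def by (rule ratio_split[OF _ a1 refl _ e1[unfolded AA_def]]) (use P2[OF z] al in auto)
      then show "ereal ((1 - (cmod z)^2) powr \<beta> * cmod (W2 u \<phi> z) / (1 - (cmod (\<phi> z))^2) powr (\<alpha>+1)) \<le> ereal R" by simp
    qed
    then show ?thesis by (rule le_less_trans) simp
  qed
qed



lemma KK_pos: "KK \<gamma> > 0" unfolding KK_def by (simp add: add_pos_nonneg)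

theorem theorem3p3:
  fixes \<alpha> \<beta> :: real
  assumes "\<alpha> > 1" and "\<beta> > 0"
  shows "(\<exists>C::real. C > 0 \<and>
           (\<forall>u \<phi>. u holomorphic_on disc \<longrightarrow> self_map \<phi> \<longrightarrow>
              sup_ratio \<beta> \<alpha> \<phi> (W1 u \<phi>) \<le> ereal C * sup_power \<beta> \<alpha> \<phi> (W1 u \<phi>) \<and>
              sup_power \<beta> \<alpha> \<phi> (W1 u \<phi>) \<le> ereal C * sup_ratio \<beta> \<alpha> \<phi> (W1 u \<phi>) \<and>
              sup_ratio \<beta> (\<alpha> + 1) \<phi> (W2 u \<phi>) \<le> ereal C * sup_power \<beta> (\<alpha> + 1) \<phi> (W2 u \<phi>) \<and>
              sup_power \<beta> (\<alpha> + 1) \<phi> (W2 u \<phi>) \<le> ereal C * sup_ratio \<beta> (\<alpha> + 1) \<phi> (W2 u \<phi>) \<and>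
              sup_ratio \<beta> (\<alpha> - 1) \<phi> (W3 u) \<le> ereal C * sup_power \<beta> (\<alpha> - 1) \<phi> (W3 u) \<and>
              sup_power \<beta> (\<alpha> - 1) \<phi> (W3 u) \<le> ereal C * sup_ratio \<beta> (\<alpha> - 1) \<phi> (W3 u)))
       \<and> (\<forall>u \<phi>. u holomorphic_on disc \<longrightarrow> self_map \<phi> \<longrightarrow>
            (bounded_wco_bloch_zyg \<alpha> \<beta> u \<phi> \<longleftrightarrow>
               sup_ratio \<beta> \<alpha> \<phi> (W1 u \<phi>) < \<infinity> \<and> sup_power \<beta> \<alpha> \<phi> (W1 u \<phi>) < \<infinity> \<and>
               sup_ratio \<beta> (\<alpha> + 1) \<phi> (W2 u \<phi>) < \<infinity> \<and> sup_power \<beta> (\<alpha> + 1) \<phi> (W2 u \<phi>) < \<infinity> \<and>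
               sup_ratio \<beta> (\<alpha> - 1) \<phi> (W3 u) < \<infinity> \<and> sup_power \<beta> (\<alpha> - 1) \<phi> (W3 u) < \<infinity>))"
proof -
  have al: "\<alpha> > 1" using assms by simp
  define C where "C = KK \<alpha> + KK (\<alpha>+1) + KK (\<alpha>-1)"
  have C0: "C > 0" unfolding C_def using KK_pos[of \<alpha>] KK_pos[of "\<alpha>+1"] KK_pos[of "\<alpha>-1"] by simp
  have Ca: "KK \<alpha> \<le> C" "KK (\<alpha>+1) \<le> C" "KK (\<alpha>-1) \<le> C"
    unfolding C_def using KK_pos[of \<alpha>] KK_pos[of "\<alpha>+1"] KK_pos[of "\<alpha>-1"] by simp_all
  have g: "\<alpha> > 0" "\<alpha> + 1 > 0" "\<alpha> - 1 > 0" using al by simp_all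
  have ph: "\<forall>z\<in>disc. cmod (\<phi> z) < 1" if "self_map \<phi>" for \<phi>
    using self_map_lt[OF that] by (simp add: disc_iff)
  have eq: "sup_ratio \<beta> \<gamma> \<phi> w \<le> ereal C * sup_power \<beta> \<gamma> \<phi> w \<and> sup_power \<beta> \<gamma> \<phi> w \<le> ereal C * sup_ratio \<beta> \<gamma> \<phi> w"
    if "self_map \<phi>" "\<gamma> > 0" "KK \<gamma> \<le> C" for \<phi> w \<gamma>
    using equiv_both[OF that(2) ph[OF that(1)] that(3)] by blast
  have fin: "sup_power \<beta> \<gamma> \<phi> w < \<infinity>" if "sup_ratio \<beta> \<gamma> \<phi> w < \<infinity>" "self_map \<phi>" "\<gamma> > 0" "KK \<gamma> \<le> C" for \<phi> w \<gamma>
  proof -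
    have "sup_power \<beta> \<gamma> \<phi> w \<le> ereal C * sup_ratio \<beta> \<gamma> \<phi> w" using eq[OF that(2-4)] by blast
    moreover have "ereal C * sup_ratio \<beta> \<gamma> \<phi> w < \<infinity>"
      using that(1) sup_ratio_nonneg[of \<beta> \<gamma> \<phi> w] by (cases "sup_ratio \<beta> \<gamma> \<phi> w") auto
    ultimately show ?thesis by (rule le_less_trans)
  qed
  show ?thesis
  proof (intro conjI exI[of _ C] allI impI)
    show "C > 0" by (rule C0)
  next
    fix u \<phi> assume u: "u holomorphic_on disc" and p: "self_map \<phi>"
    show "sup_ratio \<beta> \<alpha> \<phi> (W1 u \<phi>) \<le> ereal C * sup_power \<beta> \<alpha> \<phi> (W1 u \<phi>)"
      "sup_power \<beta> \<alpha> \<phi> (W1 u \<phi>) \<le> ereal C * sup_ratio \<beta> \<alpha> \<phi> (W1 u \<phi>)"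
      using eq[OF p g(1) Ca(1)] by blast+
    show "sup_ratio \<beta> (\<alpha>+1) \<phi> (W2 u \<phi>) \<le> ereal C * sup_power \<beta> (\<alpha>+1) \<phi> (W2 u \<phi>)"
      "sup_power \<beta> (\<alpha>+1) \<phi> (W2 u \<phi>) \<le> ereal C * sup_ratio \<beta> (\<alpha>+1) \<phi> (W2 u \<phi>)"
      using eq[OF p g(2) Ca(2)] by blast+
    show "sup_ratio \<beta> (\<alpha>-1) \<phi> (W3 u) \<le> ereal C * sup_power \<beta> (\<alpha>-1) \<phi> (W3 u)"
      "sup_power \<beta> (\<alpha>-1) \<phi> (W3 u) \<le> ereal C * sup_ratio \<beta> (\<alpha>-1) \<phi> (W3 u)"
      using eq[OF p g(3) Ca(3)] by blast+
  next
    fix u \<phi> assume u: "u holomorphic_on disc" and p: "self_map \<phi>"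
    show "bounded_wco_bloch_zyg \<alpha> \<beta> u \<phi> \<longleftrightarrow>
               sup_ratio \<beta> \<alpha> \<phi> (W1 u \<phi>) < \<infinity> \<and> sup_power \<beta> \<alpha> \<phi> (W1 u \<phi>) < \<infinity> \<and>
               sup_ratio \<beta> (\<alpha> + 1) \<phi> (W2 u \<phi>) < \<infinity> \<and> sup_power \<beta> (\<alpha> + 1) \<phi> (W2 u \<phi>) < \<infinity> \<and>
               sup_ratio \<beta> (\<alpha> - 1) \<phi> (W3 u) < \<infinity> \<and> sup_power \<beta> (\<alpha> - 1) \<phi> (W3 u) < \<infinity>"
    proof
      assume B: "bounded_wco_bloch_zyg \<alpha> \<beta> u \<phi>"
      note n = nec[OF al u p B]
      show "sup_ratio \<beta> \<alpha> \<phi> (W1 u \<phi>) < \<infinity> \<and> sup_power \<beta> \<alpha> \<phi> (W1 u \<phi>) < \<infinity> \<and>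
               sup_ratio \<beta> (\<alpha> + 1) \<phi> (W2 u \<phi>) < \<infinity> \<and> sup_power \<beta> (\<alpha> + 1) \<phi> (W2 u \<phi>) < \<infinity> \<and>
               sup_ratio \<beta> (\<alpha> - 1) \<phi> (W3 u) < \<infinity> \<and> sup_power \<beta> (\<alpha> - 1) \<phi> (W3 u) < \<infinity>"
        using n fin[OF n(1) p g(1) Ca(1)] fin[OF n(2) p g(2) Ca(2)] fin[OF n(3) p g(3) Ca(3)] by blast
    next
      assume "sup_ratio \<beta> \<alpha> \<phi> (W1 u \<phi>) < \<infinity> \<and> sup_power \<beta> \<alpha> \<phi> (W1 u \<phi>) < \<infinity> \<and>
               sup_ratio \<beta> (\<alpha> + 1) \<phi> (W2 u \<phi>) < \<infinity> \<and> sup_power \<beta> (\<alpha> + 1) \<phi> (W2 u \<phi>) < \<infinity> \<and>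
               sup_ratio \<beta> (\<alpha> - 1) \<phi> (W3 u) < \<infinity> \<and> sup_power \<beta> (\<alpha> - 1) \<phi> (W3 u) < \<infinity>"
      then show "bounded_wco_bloch_zyg \<alpha> \<beta> u \<phi>" using suff[OF al u p] by blast
    qed
  qed
qed


end
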